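(* Let $\mathbf{B}$ be a binomial ring and $n\ge0$. The pure mazes (those with all labels equal to $1$) form a basis of the category $\mathfrak{Laby}_n$; that is, for finite sets $X,Y$, the images of the pure mazes $X\to Y$ having at most $n$ passages form a basis of the $\mathbf{B}$-module $\mathfrak{Laby}_n(X,Y)$.
   Context: Binomial ring: commutative unital, torsion-free, with $\binom ak=a(a-1)\cdots(a-k+1)/k!\in\mathbf{B}$ for all $a\in\mathbf{B}$, $k\ge0$. A passage $p\colon x\to y$ carries label $\overline p\in\mathbf{B}$; a maze $P\colon X\to Y$ between finite sets is a finite multi-set of passages with every element of $X$ a source and every element of $Y$ a target; $|P|$ is the number of passages with multiplicity. $\mathfrak{Laby}$: objects formal finite direct sums of finite sets; $\mathfrak{Laby}(X,Y)$ generated by mazes modulo $P\cup\{x\xrightarrow0y\}=0$ and $P\cup\{x\xrightarrow{a+b}y\}=P\cup\{x\xrightarrow ay\}+P\cup\{x\xrightarrow by\}+P\cup\{x\xrightarrow ay,x\xrightarrow by\}$; composition $P\circ Q=\sum_{U\sqsubseteq P\boxtimes Q}U$ ($U$ a sub-multi-set of composable pairs using every passage occurrence of $P$ and $Q$, read as the maze with passages $x\xrightarrow{\overline p\overline q}z$). $\mathfrak{Laby}_n$ is the quotient of $\mathfrak{Laby}$ by (III) $P=0$ whenever $|P|>n$ and (IV) $P=\sum_d\prod_p\binom{\overline p}{d_p}I_d$, $d$ ranging over assignments $d_p\ge1$ to passage occurrences $p$ of $P$ and $I_d$ the maze with $d_p$ passages from the source to the target of $p$ labelled $1$. *)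

theory Defs
  imports Main "HOL-Library.Multiset"
begin

definition binomial_ring :: "'b::comm_ring_1 itself \<Rightarrow> bool" where
  "binomial_ring _ \<longleftrightarrow>
     (\<forall>(m::nat) (a::'b). m > 0 \<longrightarrow> of_nat m * a = 0 \<longrightarrow> a = 0) \<and>
     (\<forall>(a::'b) (k::nat). \<exists>c. of_nat (fact k) * c = (\<Prod>i<k. a - of_nat i))"

text \<open>The binomial coefficient (a choose k) in a binomial ring (unique by torsion-freeness).\<close>
definition bin :: "'b::comm_ring_1 \<Rightarrow> nat \<Rightarrow> 'b" where
  "bin a k = (THE c. of_nat (fact k) * c = (\<Prod>i<k. a - of_nat i))"

text \<open>A passage is a triple (source, target, label); a maze is a finite multiset of passages.
  A maze P is a maze X \<rightarrow> Y iff its set of sources is X and its set of targets is Y.\<close>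
type_synonym ('a, 'b) maze = "('a \<times> 'a \<times> 'b) multiset"

definition srcs :: "('a, 'b) maze \<Rightarrow> 'a set" where
  "srcs P = fst ` set_mset P"

definition tgts :: "('a, 'b) maze \<Rightarrow> 'a set" where
  "tgts P = (\<lambda>p. fst (snd p)) ` set_mset P"

definition is_maze :: "'a set \<Rightarrow> 'a set \<Rightarrow> ('a, 'b) maze \<Rightarrow> bool" where
  "is_maze X Y P \<longleftrightarrow> srcs P = X \<and> tgts P = Y"

definition pure :: "('a, 'b::one) maze \<Rightarrow> bool" where
  "pure P \<longleftrightarrow> (\<forall>p \<in># P. snd (snd p) = 1)"

text \<open>Elements of the free module are coefficient functions on mazes (finitely supported).\<close>
definition delta :: "'m \<Rightarrow> 'm \<Rightarrow> 'b::comm_ring_1" where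
  "delta m = (\<lambda>m'. if m' = m then 1 else 0)"

definition supp :: "('m \<Rightarrow> 'b::zero) \<Rightarrow> 'm set" where
  "supp f = {m. f m \<noteq> 0}"

inductive_set lspan :: "('m \<Rightarrow> 'b::comm_ring_1) set \<Rightarrow> ('m \<Rightarrow> 'b) set"
  for G :: "('m \<Rightarrow> 'b) set" where
  zero: "(\<lambda>_. 0) \<in> lspan G"
| gen: "g \<in> G \<Longrightarrow> g \<in> lspan G"
| add: "a \<in> lspan G \<Longrightarrow> b \<in> lspan G \<Longrightarrow> (\<lambda>m. a m + b m) \<in> lspan G"
| smult: "a \<in> lspan G \<Longrightarrow> (\<lambda>m. c * a m) \<in> lspan G"

text \<open>For enumerations ps of P and qs of Q (with Q : X \<rightarrow> Y, P : Y \<rightarrow> Z), a composable pair is a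
  pair (i,j) of occurrence indices with source of ps!i = target of qs!j.\<close>
definition comp_pairs :: "('a \<times> 'a \<times> 'b) list \<Rightarrow> ('a \<times> 'a \<times> 'b) list \<Rightarrow> (nat \<times> nat) set" where
  "comp_pairs ps qs = {(i, j). i < length ps \<and> j < length qs \<and> fst (ps ! i) = fst (snd (qs ! j))}"

definition comp_subsets :: "('a \<times> 'a \<times> 'b) list \<Rightarrow> ('a \<times> 'a \<times> 'b) list \<Rightarrow> (nat \<times> nat) set set" where
  "comp_subsets ps qs = {U. U \<subseteq> comp_pairs ps qs \<and> fst ` U = {..<length ps} \<and> snd ` U = {..<length qs}}"

definition maze_of :: "('a \<times> 'a \<times> 'b::times) list \<Rightarrow> ('a \<times> 'a \<times> 'b) list \<Rightarrow> (nat \<times> nat) set \<Rightarrow> ('a, 'b) maze" where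
  "maze_of ps qs U = image_mset (\<lambda>(i, j). (fst (qs ! j), fst (snd (ps ! i)), snd (snd (ps ! i)) * snd (snd (qs ! j)))) (mset_set U)"

text \<open>P \<circ> Q as an element of the free module (independent of the chosen enumerations).\<close>
definition comp_maze :: "('a, 'b::comm_ring_1) maze \<Rightarrow> ('a, 'b) maze \<Rightarrow> (('a, 'b) maze \<Rightarrow> 'b)" where
  "comp_maze P Q = (let ps = (SOME ps. mset ps = P); qs = (SOME qs. mset qs = Q) in
      (\<lambda>M. of_nat (card {U \<in> comp_subsets ps qs. maze_of ps qs U = M})))"

definition comp :: "(('a, 'b::comm_ring_1) maze \<Rightarrow> 'b) \<Rightarrow> (('a, 'b) maze \<Rightarrow> 'b) \<Rightarrow> (('a, 'b) maze \<Rightarrow> 'b)" where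
  "comp f g = (\<lambda>M. \<Sum>P\<in>supp f. \<Sum>Q\<in>supp g. f P * g Q * comp_maze P Q M)"

definition laby_rels :: "(('a, 'b::comm_ring_1) maze \<Rightarrow> 'b) set" where
  "laby_rels =
     {delta (P + {#(x, y, 0)#}) | P x y. True} \<union>
     {(\<lambda>M. delta (P + {#(x, y, a + b)#}) M - delta (P + {#(x, y, a)#}) M
            - delta (P + {#(x, y, b)#}) M - delta (P + {#(x, y, a), (x, y, b)#}) M) | P x y a b. True}"

definition rels_III :: "nat \<Rightarrow> (('a, 'b::comm_ring_1) maze \<Rightarrow> 'b) set" where
  "rels_III n = {delta P | P. size P > n}"

text \<open>For an enumeration ps of the passage occurrences of P and an assignment
  ds of multiplicities d_p \<ge> 1, I_d has d_p passages from the source to the target of p labelled 1.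
  Terms with |I_d| > n vanish by (III), so the sum is restricted to those with |I_d| \<le> n.\<close>
definition I_d :: "('a \<times> 'a \<times> 'b::one) list \<Rightarrow> nat list \<Rightarrow> ('a, 'b) maze" where
  "I_d ps ds = mset (concat (map (\<lambda>(p, k). replicate k (fst p, fst (snd p), 1)) (zip ps ds)))"

definition assignments :: "nat \<Rightarrow> 'x list \<Rightarrow> nat list set" where
  "assignments n ps = {ds. length ds = length ps \<and> (\<forall>k \<in> set ds. k \<ge> 1) \<and> sum_list ds \<le> n}"

definition rels_IV :: "nat \<Rightarrow> (('a, 'b::comm_ring_1) maze \<Rightarrow> 'b) set" where
  "rels_IV n = {(\<lambda>M. delta (mset ps) M -
       (\<Sum>ds\<in>assignments n ps.
          prod_list (map (\<lambda>(p, k). bin (snd (snd p)) k) (zip ps ds)) * delta (I_d ps ds) M))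
     | ps. True}"

text \<open>The kernel of the projection from the free module on mazes onto Laby_n: the two-sided
  ideal generated by all relations (I)--(IV), i.e. the span of all composites A \<circ> r \<circ> B with
  A, B mazes and r a relation (identity mazes are mazes, so r itself is included).\<close>
definition laby_n_kernel :: "nat \<Rightarrow> (('a, 'b::comm_ring_1) maze \<Rightarrow> 'b) set" where
  "laby_n_kernel n = lspan {comp (delta A) (comp r (delta B)) | A B r.
        r \<in> laby_rels \<union> rels_III n \<union> rels_IV n}"

end

theory Submission
  imports Defs "HOL-Library.Function_Algebras"
begin

context
  assumes BR: "binomial_ring TYPE('b::comm_ring_1)"
begin

lemma tf: "m > 0 \<Longrightarrow> of_nat m * (a::'b) = 0 \<Longrightarrow> a = 0"
  using BR unfolding binomial_ring_def by blast

lemma cancel_nat: "m > 0 \<Longrightarrow> of_nat m * (x::'b) = of_nat m * y \<Longrightarrow> x = y"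
  using tf[of m "x - y"] by (simp add: right_diff_distrib)

lemma bin_spec: "of_nat (fact k) * bin (a::'b) k = (\<Prod>i<k. a - of_nat i)"
proof -
  let ?P = "\<lambda>c. of_nat (fact k) * c = (\<Prod>i<k. a - of_nat i)"
  have ex: "\<exists>c. ?P c" using BR unfolding binomial_ring_def by blast
  have "\<exists>!c. ?P c"
  proof -
    from ex obtain c where c: "?P c" by blast
    have "\<And>c'. ?P c' \<Longrightarrow> c' = c" using c cancel_nat[of "fact k"] by force
    with c show ?thesis by blast
  qed
  then show ?thesis unfolding bin_def by (rule theI')
qed

lemma bin_eqI: "of_nat (fact k) * c = (\<Prod>i<k. (a::'b) - of_nat i) \<Longrightarrow> bin a k = c"
  using bin_spec[of k a] cancel_nat[of "fact k"] by force

lemma bin_0 [simp]: "bin (a::'b) 0 = 1"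
  by (rule bin_eqI) simp

lemma bin_zero_Suc [simp]: "bin (0::'b) (Suc k) = 0"
proof (rule bin_eqI)
  have "(\<Prod>i<Suc k. (0::'b) - of_nat i) = 0"
    by (rule prod_zero) (auto intro: bexI[of _ 0])
  then show "of_nat (fact (Suc k)) * 0 = (\<Prod>i<Suc k. (0::'b) - of_nat i)" by simp
qed

lemma bin_Suc: "of_nat (Suc k) * bin (x::'b) (Suc k) = bin x k * (x - of_nat k)"
proof (rule cancel_nat[of "fact k"])
  show "0 < (fact k :: nat)" by simp
  have "of_nat (fact k) * (of_nat (Suc k) * bin x (Suc k)) = of_nat (fact (Suc k)) * bin x (Suc k)"
    by (simp add: algebra_simps)
  also have "\<dots> = (\<Prod>i<Suc k. x - of_nat i)" by (rule bin_spec)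
  also have "\<dots> = (\<Prod>i<k. x - of_nat i) * (x - of_nat k)" by simp
  also have "\<dots> = of_nat (fact k) * (bin x k * (x - of_nat k))"
    by (simp add: bin_spec[symmetric] mult.assoc)
  finally show "of_nat (fact k) * (of_nat (Suc k) * bin x (Suc k)) = of_nat (fact k) * (bin x k * (x - of_nat k))" .
qed

lemma bin_mult_x: "x * bin (x::'b) d = of_nat (Suc d) * bin x (Suc d) + of_nat d * bin x d"
  by (simp only: bin_Suc) (simp add: algebra_simps)

lemma bin_pascal: "bin ((x::'b) + 1) (Suc d) = bin x (Suc d) + bin x d"
proof (rule cancel_nat[of "fact (Suc d)"])
  show "0 < (fact (Suc d) :: nat)" by simp
  have A: "(\<Prod>i<Suc d. x + 1 - of_nat i) = (x + 1) * (\<Prod>i<d. x - of_nat i)"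
    by (subst prod.lessThan_Suc_shift) (simp add: algebra_simps)
  have "of_nat (fact (Suc d)) * (bin x (Suc d) + bin x d)
        = (\<Prod>i<Suc d. x - of_nat i) + of_nat (Suc d) * (of_nat (fact d) * bin x d)"
    by (simp add: bin_spec[symmetric] algebra_simps)
  also have "\<dots> = (\<Prod>i<d. x - of_nat i) * (x - of_nat d) + of_nat (Suc d) * (\<Prod>i<d. x - of_nat i)"
    by (simp add: bin_spec)
  also have "\<dots> = (x + 1) * (\<Prod>i<d. x - of_nat i)" by (simp add: algebra_simps)
  finally show "of_nat (fact (Suc d)) * bin (x + 1) (Suc d) = of_nat (fact (Suc d)) * (bin x (Suc d) + bin x d)"
    using A bin_spec[of "Suc d" "x+1"] by simp
qed

definition NP :: "nat \<Rightarrow> ('b \<Rightarrow> 'b) \<Rightarrow> bool" where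
  "NP K g \<longleftrightarrow> (\<exists>\<beta>. \<forall>a. g a = (\<Sum>d\<le>K. \<beta> d * bin a d))"

definition dif1 :: "('b \<Rightarrow> 'b) \<Rightarrow> 'b \<Rightarrow> 'b" where
  "dif1 g = (\<lambda>a. g (a + 1) - g a)"

lemma dif1_sum_bin:
  "dif1 (\<lambda>a. \<Sum>d\<le>Suc M. \<gamma> d * bin a d) = (\<lambda>a. \<Sum>d\<le>M. \<gamma> (Suc d) * bin a d)"
proof
  fix a :: 'b
  have "dif1 (\<lambda>a. \<Sum>d\<le>Suc M. \<gamma> d * bin a d) a = (\<Sum>d\<le>Suc M. \<gamma> d * (bin (a+1) d - bin a d))"
    unfolding dif1_def by (simp add: sum_subtractf right_diff_distrib)
  also have "\<dots> = (\<Sum>d\<le>M. \<gamma> (Suc d) * (bin (a+1) (Suc d) - bin a (Suc d)))"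
    by (subst sum.atMost_Suc_shift) simp
  also have "\<dots> = (\<Sum>d\<le>M. \<gamma> (Suc d) * bin a d)"
    by (simp add: bin_pascal)
  finally show "dif1 (\<lambda>a. \<Sum>d\<le>Suc M. \<gamma> d * bin a d) a = (\<Sum>d\<le>M. \<gamma> (Suc d) * bin a d)" .
qed

lemma dif1_iter_sum_bin:
  "e \<le> K \<Longrightarrow> (dif1 ^^ e) (\<lambda>a. \<Sum>d\<le>K. \<beta> d * bin a d) = (\<lambda>a. \<Sum>d\<le>K - e. \<beta> (d + e) * bin a d)"
proof (induction e)
  case 0
  then show ?case by simp
next
  case (Suc e)
  define M where "M = K - Suc e"
  have M: "K - e = Suc M" using Suc.prems unfolding M_def by arith
  have "(dif1 ^^ Suc e) (\<lambda>a. \<Sum>d\<le>K. \<beta> d * bin a d) = dif1 (\<lambda>a. \<Sum>d\<le>Suc M. \<beta> (d + e) * bin a d)"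
    using Suc M by simp
  also have "\<dots> = (\<lambda>a. \<Sum>d\<le>M. \<beta> (Suc d + e) * bin a d)" by (rule dif1_sum_bin)
  finally show ?case using M unfolding M_def by simp
qed

lemma sum_bin_at0: "(\<Sum>d\<le>M. \<gamma> d * bin (0::'b) d) = \<gamma> 0"
proof -
  have "(\<Sum>d\<le>M. \<gamma> d * bin (0::'b) d) = (\<Sum>d\<in>{0}. \<gamma> d * bin (0::'b) d)"
  proof (rule sum.mono_neutral_right)
    show "\<forall>i\<in>{..M} - {0}. \<gamma> i * bin (0::'b) i = 0"
    proof
      fix i assume "i \<in> {..M} - {0}"
      then obtain j where "i = Suc j" by (cases i) auto
      then show "\<gamma> i * bin (0::'b) i = 0" by simp
    qed
  qed auto
  then show ?thesis by simp
qed

lemma NP_coeff: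
  assumes "\<forall>a. g a = (\<Sum>d\<le>K. \<beta> d * bin a d)" "e \<le> K"
  shows "(dif1 ^^ e) g 0 = \<beta> e"
proof -
  have "g = (\<lambda>a. \<Sum>d\<le>K. \<beta> d * bin a d)" using assms(1) by auto
  then show ?thesis using dif1_iter_sum_bin[OF assms(2), of \<beta>] sum_bin_at0 by simp
qed

lemma NP_newton: "NP K g \<Longrightarrow> g a = (\<Sum>d\<le>K. (dif1 ^^ d) g 0 * bin a d)"
proof -
  assume "NP K g"
  then obtain \<beta> where b: "\<forall>a. g a = (\<Sum>d\<le>K. \<beta> d * bin a d)" unfolding NP_def by blast
  have "\<And>d. d \<in> {..K} \<Longrightarrow> \<beta> d * bin a d = (dif1 ^^ d) g 0 * bin a d"
    using NP_coeff[OF b] by simp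
  then have "(\<Sum>d\<le>K. \<beta> d * bin a d) = (\<Sum>d\<le>K. (dif1 ^^ d) g 0 * bin a d)"
    by (rule sum.cong[OF refl])
  then show ?thesis using b by simp
qed

lemma dif1_iter_scale: "(dif1 ^^ e) (\<lambda>a. c * g a) = (\<lambda>a. c * (dif1 ^^ e) g a)"
  by (induction e) (simp_all add: dif1_def algebra_simps)

lemma dif1_iter_add: "(dif1 ^^ e) (\<lambda>a. f a + g a) = (\<lambda>a. (dif1 ^^ e) f a + (dif1 ^^ e) g a)"
  by (induction e) (simp_all add: dif1_def algebra_simps)

lemma dif1_iter_diff: "(dif1 ^^ e) (\<lambda>a. f a - g a) = (\<lambda>a. (dif1 ^^ e) f a - (dif1 ^^ e) g a)"
  by (induction e) (simp_all add: dif1_def algebra_simps)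

lemma NP_cancel:
  assumes "NP K (\<lambda>a. of_nat j * g a)" "j > 0"
  shows "NP K g"
proof -
  have "\<forall>a. g a = (\<Sum>d\<le>K. (dif1 ^^ d) g 0 * bin a d)"
  proof
    fix a
    have "of_nat j * g a = (\<Sum>d\<le>K. (dif1 ^^ d) (\<lambda>a. of_nat j * g a) 0 * bin a d)"
      using NP_newton[OF assms(1)] .
    also have "\<dots> = of_nat j * (\<Sum>d\<le>K. (dif1 ^^ d) g 0 * bin a d)"
      by (simp add: dif1_iter_scale sum_distrib_left mult.assoc)
    finally show "g a = (\<Sum>d\<le>K. (dif1 ^^ d) g 0 * bin a d)"
      using cancel_nat[OF assms(2)] by blast
  qed
  then show ?thesis unfolding NP_def by (rule exI[of _ "\<lambda>d. (dif1 ^^ d) g 0"])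
qed

lemma NP_reduce:
  assumes "NP (Suc m) g" "(dif1 ^^ Suc m) g 0 = 0"
  shows "NP m g"
proof -
  have "\<forall>a. g a = (\<Sum>d\<le>m. (dif1 ^^ d) g 0 * bin a d)"
    using NP_newton[OF assms(1)] assms(2) by simp
  then show ?thesis unfolding NP_def by (rule exI[of _ "\<lambda>d. (dif1 ^^ d) g 0"])
qed

lemma NP_mono: "NP K g \<Longrightarrow> K \<le> K' \<Longrightarrow> NP K' g"
proof -
  assume "NP K g" "K \<le> K'"
  then obtain \<beta> where b: "\<forall>a. g a = (\<Sum>d\<le>K. \<beta> d * bin a d)" unfolding NP_def by blast
  have "\<forall>a. g a = (\<Sum>d\<le>K'. (if d \<le> K then \<beta> d else 0) * bin a d)"
  proof
    fix a
    have "(\<Sum>d\<le>K'. (if d \<le> K then \<beta> d else 0) * bin a d) = (\<Sum>d\<le>K. (if d \<le> K then \<beta> d else 0) * bin a d)"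
      by (rule sum.mono_neutral_right) (use \<open>K \<le> K'\<close> in auto)
    then show "g a = (\<Sum>d\<le>K'. (if d \<le> K then \<beta> d else 0) * bin a d)" using b by simp
  qed
  then show "NP K' g" unfolding NP_def by (rule exI[of _ "\<lambda>d. if d \<le> K then \<beta> d else 0"])
qed

lemma NP_add: "NP K f \<Longrightarrow> NP K g \<Longrightarrow> NP K (\<lambda>a. f a + g a)"
proof -
  assume "NP K f" "NP K g"
  then obtain \<beta>1 \<beta>2 where b1: "\<forall>a. f a = (\<Sum>d\<le>K. \<beta>1 d * bin a d)"
    and b2: "\<forall>a. g a = (\<Sum>d\<le>K. \<beta>2 d * bin a d)" unfolding NP_def by blast
  have "\<forall>a. f a + g a = (\<Sum>d\<le>K. (\<beta>1 d + \<beta>2 d) * bin a d)"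
    using b1 b2 by (simp add: sum.distrib distrib_right)
  then show ?thesis unfolding NP_def by (rule exI[of _ "\<lambda>d. \<beta>1 d + \<beta>2 d"])
qed

lemma NP_scale: "NP K g \<Longrightarrow> NP K (\<lambda>a. c * g a)"
proof -
  assume "NP K g"
  then obtain \<beta> where b: "\<forall>a. g a = (\<Sum>d\<le>K. \<beta> d * bin a d)" unfolding NP_def by blast
  have "\<forall>a. c * g a = (\<Sum>d\<le>K. (c * \<beta> d) * bin a d)"
    using b by (simp add: sum_distrib_left mult.assoc)
  then show ?thesis unfolding NP_def by (rule exI[of _ "\<lambda>d. c * \<beta> d"])
qed

lemma NP_const: "NP K (\<lambda>a. c)"
proof -
  have "\<forall>a. c = (\<Sum>d\<le>0. c * bin a d)" by simp
  then have "NP 0 (\<lambda>a. c)" unfolding NP_def by (rule exI[of _ "\<lambda>d. c"])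
  then show ?thesis by (rule NP_mono) simp
qed

lemma NP_bin: "d \<le> K \<Longrightarrow> NP K (\<lambda>a. bin a d)"
proof -
  assume "d \<le> K"
  have "\<forall>a. bin a d = (\<Sum>e\<le>K. (if e = d then 1 else 0) * bin a e)"
  proof
    fix a
    have "(\<Sum>e\<le>K. (if e = d then 1 else 0) * bin a e) = (\<Sum>e\<le>K. if e = d then bin a e else 0)"
      by (rule sum.cong) auto
    also have "\<dots> = bin a d" using \<open>d \<le> K\<close> by (simp add: sum.delta')
    finally show "bin a d = (\<Sum>e\<le>K. (if e = d then 1 else 0) * bin a e)" by simp
  qed
  then show ?thesis unfolding NP_def by (rule exI[of _ "\<lambda>e. if e = d then 1 else 0"])
qed

lemma NP_diff: "NP K f \<Longrightarrow> NP K g \<Longrightarrow> NP K (\<lambda>a. f a - g a)"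
  using NP_add[of K f "\<lambda>a. (-1) * g a"] NP_scale[of K g "-1"] by simp

lemma NP_sum: "finite I \<Longrightarrow> (\<And>i. i \<in> I \<Longrightarrow> NP K (f i)) \<Longrightarrow> NP K (\<lambda>a. \<Sum>i\<in>I. f i a)"
proof (induction I rule: finite_induct)
  case empty
  then show ?case using NP_const[of K 0] by simp
next
  case (insert x F)
  then show ?case using NP_add[of K "f x" "\<lambda>a. \<Sum>i\<in>F. f i a"] by simp
qed

lemma NP_mult_x: "NP K g \<Longrightarrow> NP (Suc K) (\<lambda>a. a * g a)"
proof -
  assume "NP K g"
  then obtain \<beta> where b: "\<forall>a. g a = (\<Sum>d\<le>K. \<beta> d * bin a d)" unfolding NP_def by blast
  have eq: "(\<lambda>a. a * g a) = (\<lambda>a. \<Sum>d\<le>K. \<beta> d * (of_nat (Suc d) * bin a (Suc d)) + \<beta> d * (of_nat d * bin a d))"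
  proof
    fix a
    have "a * g a = (\<Sum>d\<le>K. \<beta> d * (a * bin a d))"
      using b by (simp add: sum_distrib_left mult.left_commute)
    then show "a * g a = (\<Sum>d\<le>K. \<beta> d * (of_nat (Suc d) * bin a (Suc d)) + \<beta> d * (of_nat d * bin a d))"
      by (simp only: bin_mult_x distrib_left)
  qed
  show ?thesis unfolding eq
  proof (rule NP_sum)
    fix d assume "d \<in> {..K}"
    then show "NP (Suc K) (\<lambda>a. \<beta> d * (of_nat (Suc d) * bin a (Suc d)) + \<beta> d * (of_nat d * bin a d))"
      by (intro NP_add NP_scale NP_bin) auto
  qed simp
qed

lemma NP_mult_bin: "NP K g \<Longrightarrow> NP (K + e) (\<lambda>a. g a * bin a e)"
proof (induction e)
  case 0
  then show ?case by simp
next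
  case (Suc e)
  have IH: "NP (K + e) (\<lambda>a. g a * bin a e)" using Suc by blast
  have "(\<lambda>a. of_nat (Suc e) * (g a * bin a (Suc e))) = (\<lambda>a. a * (g a * bin a e) - of_nat e * (g a * bin a e))"
  proof
    fix a
    have "of_nat (Suc e) * (g a * bin a (Suc e)) = g a * (of_nat (Suc e) * bin a (Suc e))"
      by (simp only: mult.left_commute)
    also have "\<dots> = g a * (bin a e * (a - of_nat e))" by (simp only: bin_Suc)
    finally show "of_nat (Suc e) * (g a * bin a (Suc e)) = a * (g a * bin a e) - of_nat e * (g a * bin a e)"
      by (simp add: algebra_simps)
  qed
  moreover have "NP (K + Suc e) (\<lambda>a. a * (g a * bin a e) - of_nat e * (g a * bin a e))"
  proof -
    have A: "NP (Suc (K + e)) (\<lambda>a. a * (g a * bin a e))" by (rule NP_mult_x[OF IH])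
    have B: "NP (Suc (K + e)) (\<lambda>a. of_nat e * (g a * bin a e))"
      by (rule NP_mono[OF NP_scale[OF IH]]) simp
    show ?thesis using NP_diff[OF A B] by simp
  qed
  ultimately have "NP (K + Suc e) (\<lambda>a. of_nat (Suc e) * (g a * bin a (Suc e)))" by simp
  then show ?case by (rule NP_cancel) simp
qed

lemma NP_mult: "NP K f \<Longrightarrow> NP L g \<Longrightarrow> NP (K + L) (\<lambda>a. f a * g a)"
proof -
  assume f: "NP K f" and "NP L g"
  then obtain \<beta> where b: "\<forall>a. g a = (\<Sum>d\<le>L. \<beta> d * bin a d)" unfolding NP_def by blast
  have eq: "(\<lambda>a. f a * g a) = (\<lambda>a. \<Sum>d\<le>L. \<beta> d * (f a * bin a d))"
    using b by (auto simp: sum_distrib_left algebra_simps)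
  show ?thesis unfolding eq
  proof (rule NP_sum)
    fix d assume "d \<in> {..L}"
    then show "NP (K + L) (\<lambda>a. \<beta> d * (f a * bin a d))"
      by (intro NP_scale NP_mono[OF NP_mult_bin[OF f]]) auto
  qed simp
qed

lemma NP_bin_affine: "NP k (\<lambda>a. bin (u + a * c) k)"
proof (induction k)
  case 0
  then show ?case using NP_const by simp
next
  case (Suc k)
  have "(\<lambda>a. of_nat (Suc k) * bin (u + a * c) (Suc k)) = (\<lambda>a. c * (a * bin (u + a * c) k) + (u - of_nat k) * bin (u + a * c) k)"
  proof
    fix a
    have "of_nat (Suc k) * bin (u + a * c) (Suc k) = bin (u + a * c) k * (u + a * c - of_nat k)"
      by (simp only: bin_Suc)
    then show "of_nat (Suc k) * bin (u + a * c) (Suc k) = c * (a * bin (u + a * c) k) + (u - of_nat k) * bin (u + a * c) k"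
      by (simp add: algebra_simps)
  qed
  moreover have "NP (Suc k) (\<lambda>a. c * (a * bin (u + a * c) k) + (u - of_nat k) * bin (u + a * c) k)"
  proof (rule NP_add)
    show "NP (Suc k) (\<lambda>a. c * (a * bin (u + a * c) k))" by (rule NP_scale[OF NP_mult_x[OF Suc]])
    show "NP (Suc k) (\<lambda>a. (u - of_nat k) * bin (u + a * c) k)" by (rule NP_mono[OF NP_scale[OF Suc]]) simp
  qed
  ultimately have "NP (Suc k) (\<lambda>a. of_nat (Suc k) * bin (u + a * c) (Suc k))" by simp
  then show ?case by (rule NP_cancel) simp
qed


end

definition dif :: "'v::ab_group_add \<Rightarrow> ('v \<Rightarrow> 'b::comm_ring_1) \<Rightarrow> ('v \<Rightarrow> 'b)" where
  "dif h f = (\<lambda>w. f (w + h) - f w)"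

fun zdeg :: "nat \<Rightarrow> ('v::ab_group_add \<Rightarrow> 'b::comm_ring_1) \<Rightarrow> bool" where
  "zdeg 0 f = (\<forall>h w. f (w + h) = f w)"
| "zdeg (Suc m) f = (\<forall>h. zdeg m (dif h f))"

lemma dif_add: "dif h (\<lambda>w. f w + g w) = (\<lambda>w. dif h f w + dif h g w)"
  by (auto simp: dif_def)
lemma dif_scale: "dif h (\<lambda>w. c * f w) = (\<lambda>w. c * dif h f w)"
  by (auto simp: dif_def algebra_simps)
lemma dif_comm: "dif h (dif k f) = dif k (dif h f)"
  by (auto simp: dif_def algebra_simps)

lemma zdeg_add: "zdeg m f \<Longrightarrow> zdeg m g \<Longrightarrow> zdeg m (\<lambda>w. f w + g w)"
  by (induction m arbitrary: f g) (auto simp: dif_add)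
lemma zdeg_scale: "zdeg m f \<Longrightarrow> zdeg m (\<lambda>w. c * f w)"
  by (induction m arbitrary: f) (auto simp: dif_scale)
lemma zdeg_const: "zdeg m (\<lambda>w. c)"
proof (induction m arbitrary: c)
  case 0 then show ?case by simp
next
  case (Suc m)
  have "dif h (\<lambda>w. c) = (\<lambda>w. 0)" for h :: 'a by (simp add: dif_def)
  then show ?case using Suc by simp
qed
lemma zdeg_sum: "finite I \<Longrightarrow> (\<And>i. i \<in> I \<Longrightarrow> zdeg m (f i)) \<Longrightarrow> zdeg m (\<lambda>w. \<Sum>i\<in>I. f i w)"
proof (induction I rule: finite_induct)
  case empty then show ?case using zdeg_const[of m 0] by simp
next
  case (insert x F) then show ?case using zdeg_add[of m "f x" "\<lambda>w. \<Sum>i\<in>F. f i w"] by simp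
qed
lemma zdeg_Suc: "zdeg m f \<Longrightarrow> zdeg (Suc m) f"
proof (induction m arbitrary: f)
  case 0
  then have "dif h f = (\<lambda>w. 0)" for h by (auto simp: dif_def)
  then show ?case using zdeg_const[of 0 0] by simp
next
  case (Suc m) then show ?case by simp
qed
lemma zdeg_mono: assumes "zdeg m f" "m \<le> m'" shows "zdeg m' f"
  using assms(2)
proof (induction m' rule: dec_induct)
  case base show ?case by (rule assms(1))
next
  case (step n) show ?case by (rule zdeg_Suc[OF step.IH])
qed

lemma zdeg0_dif: "zdeg 0 f \<Longrightarrow> dif h f = (\<lambda>w. 0)"
  by (auto simp: dif_def)

lemma zdeg_comp:
  assumes "\<And>x y. L (x + y) = L x + L y"
  shows "zdeg m f \<Longrightarrow> zdeg m (\<lambda>w. f (L w))"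
proof (induction m arbitrary: f)
  case 0 then show ?case by (simp add: assms)
next
  case (Suc m)
  have "dif h (\<lambda>w. f (L w)) = (\<lambda>w. dif (L h) f (L w))" for h by (auto simp: dif_def assms)
  then show ?case using Suc by simp
qed

lemma zdeg_trans: "zdeg m f \<Longrightarrow> zdeg m (\<lambda>w. f (w + c))"
proof (induction m arbitrary: f)
  case 0 then show ?case by (simp add: add.assoc[symmetric] add.commute[of _ c])
next
  case (Suc m)
  have "dif h (\<lambda>w. f (w + c)) = (\<lambda>w. dif h f (w + c))" for h by (auto simp: dif_def algebra_simps)
  then show ?case using Suc by simp
qed

lemma zdeg_const_fun: "zdeg 0 f \<Longrightarrow> f w = f 0"
  by (metis add_0 zdeg.simps(1))

lemma zdeg_mult: "zdeg m1 f \<Longrightarrow> zdeg m2 g \<Longrightarrow> zdeg (m1 + m2) (\<lambda>w. f w * g w)"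
proof (induction "m1 + m2" arbitrary: m1 m2 f g rule: less_induct)
  case less
  show ?case
  proof (cases m1)
    case 0
    then have "(\<lambda>w. f w * g w) = (\<lambda>w. f 0 * g w)" using less.prems zdeg_const_fun by metis
    then show ?thesis using zdeg_scale[OF less.prems(2)] 0 by simp
  next
    case (Suc m1')
    show ?thesis
    proof (cases m2)
      case 0
      then have "(\<lambda>w. f w * g w) = (\<lambda>w. g 0 * f w)" using less.prems zdeg_const_fun by (metis mult.commute)
      then show ?thesis using zdeg_scale[OF less.prems(1)] 0 by simp
    next
      case (Suc m2')
      have "\<forall>h. zdeg (m1' + m2) (dif h (\<lambda>w. f w * g w))"
      proof
        fix h
        have A: "zdeg (m1' + m2) (\<lambda>w. dif h f w * g (w + h))"
          using less.hyps[of m1' m2 "dif h f" "\<lambda>w. g (w + h)"] less.prems \<open>m1 = Suc m1'\<close> zdeg_trans by auto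
        have B: "zdeg (m1' + m2) (\<lambda>w. f w * dif h g w)"
          using less.hyps[of m1 m2' f "dif h g"] less.prems \<open>m2 = Suc m2'\<close> \<open>m1 = Suc m1'\<close> by auto
        have eq: "dif h (\<lambda>w. f w * g w) = (\<lambda>w. dif h f w * g (w + h) + f w * dif h g w)"
          by (auto simp: dif_def algebra_simps)
        show "zdeg (m1' + m2) (dif h (\<lambda>w. f w * g w))"
          unfolding eq by (rule zdeg_add[OF A B])
      qed
      then have "zdeg (Suc (m1' + m2)) (\<lambda>w. f w * g w)" by simp
      then show ?thesis using \<open>m1 = Suc m1'\<close> by simp
    qed
  qed
qed

lemma zdeg_dif_pow: "zdeg m F \<Longrightarrow> (dif g ^^ Suc m) F = (\<lambda>w. 0)"
proof (induction m arbitrary: F)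
  case 0 then show ?case by (simp add: zdeg0_dif)
next
  case (Suc m)
  have "(dif g ^^ Suc (Suc m)) F = (dif g ^^ Suc m) (dif g F)" by (simp only: funpow_Suc_right o_def)
  then show ?case using Suc by simp
qed

interpretation dif_cfc: comp_fun_commute "\<lambda>p. dif (H p)"
  by unfold_locales (auto simp: dif_comm)

definition Dh :: "('p \<Rightarrow> 'v::ab_group_add) \<Rightarrow> 'p multiset \<Rightarrow> ('v \<Rightarrow> 'b::comm_ring_1) \<Rightarrow> ('v \<Rightarrow> 'b)" where
  "Dh H M f = fold_mset (\<lambda>p. dif (H p)) f M"

lemma Dh_empty [simp]: "Dh H {#} f = f"
  by (simp add: Dh_def)
lemma Dh_add_mset [simp]: "Dh H (add_mset p M) f = dif (H p) (Dh H M f)"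
  by (simp add: Dh_def)
lemma Dh_union: "Dh H (M + N) f = Dh H N (Dh H M f)"
  by (induction N) auto

lemma Dh_scale: "Dh H M (\<lambda>w. c * f w) = (\<lambda>w. c * Dh H M f w)"
  by (induction M) (auto simp: dif_scale)
lemma Dh_add: "Dh H M (\<lambda>w. f w + g w) = (\<lambda>w. Dh H M f w + Dh H M g w)"
  by (induction M) (auto simp: dif_add)
lemma Dh_zero: "Dh H M (\<lambda>w. 0) = (\<lambda>w. 0)"
  using Dh_scale[of H M 0 "\<lambda>w. 0"] by simp
lemma Dh_sum: "finite I \<Longrightarrow> Dh H M (\<lambda>w. \<Sum>i\<in>I. f i w) = (\<lambda>w. \<Sum>i\<in>I. Dh H M (f i) w)"
proof (induction I rule: finite_induct)
  case empty then show ?case by (simp add: Dh_zero)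
next
  case (insert x F) then show ?case by (simp add: Dh_add)
qed
lemma Dh_trans: "Dh H M (\<lambda>w. f (w + c)) = (\<lambda>w. Dh H M f (w + c))"
  by (induction M) (simp_all add: dif_def add_ac)

lemma Dh_zdeg: "zdeg m f \<Longrightarrow> size M \<le> m \<Longrightarrow> zdeg (m - size M) (Dh H M f)"
proof (induction M)
  case empty then show ?case by simp
next
  case (add p M)
  then have IH: "zdeg (m - size M) (Dh H M f)" by simp
  have eq: "m - size M = Suc (m - size (add_mset p M))" using add.prems by simp
  from IH show ?case unfolding eq by simp
qed

lemma Dh_big: "zdeg m f \<Longrightarrow> size M > m \<Longrightarrow> Dh H M f = (\<lambda>w. 0)"
proof (induction M)
  case empty then show ?case by simp
next
  case (add p M)
  show ?case
  proof (cases "size M > m")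
    case True then show ?thesis using add by (simp add: dif_def)
  next
    case False
    then have "size M = m" using add.prems by simp
    then have "zdeg 0 (Dh H M f)" using Dh_zdeg[OF add.prems(1), of M H] by simp
    then show ?thesis by (simp add: zdeg0_dif)
  qed
qed

lemma Dh_mset_set:
  assumes "finite U"
  shows "Dh H (image_mset g (mset_set U)) f w =
    (\<Sum>V\<in>Pow U. (-1) ^ (card U - card V) * f (w + (\<Sum>u\<in>V. H (g u))))"
  using assms
proof (induction U arbitrary: w rule: finite_induct)
  case empty then show ?case by simp
next
  case (insert u U)
  let ?h = "H (g u)"
  have fin: "finite (Pow U)" using insert by simp
  have inj: "inj_on (insert u) (Pow U)" using insert.hyps by (auto simp: inj_on_def)
  have disj: "Pow U \<inter> insert u ` Pow U = {}" using insert.hyps by auto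
  have cardV: "\<And>V. V \<in> Pow U \<Longrightarrow> card V \<le> card U" using insert.hyps by (auto intro: card_mono)
  have "Dh H (image_mset g (mset_set (insert u U))) f w
        = Dh H (image_mset g (mset_set U)) f (w + ?h) - Dh H (image_mset g (mset_set U)) f w"
    using insert.hyps by (simp add: dif_def)
  also have "\<dots> = (\<Sum>V\<in>Pow U. (-1) ^ (card U - card V) * f (w + ?h + (\<Sum>u\<in>V. H (g u))))
                 - (\<Sum>V\<in>Pow U. (-1) ^ (card U - card V) * f (w + (\<Sum>u\<in>V. H (g u))))"
    using insert.IH by simp
  also have "\<dots> = (\<Sum>V\<in>insert u ` Pow U. (-1) ^ (card (insert u U) - card V) * f (w + (\<Sum>u\<in>V. H (g u))))
                 + (\<Sum>V\<in>Pow U. (-1) ^ (card (insert u U) - card V) * f (w + (\<Sum>u\<in>V. H (g u))))"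
  proof -
    have A: "(\<Sum>V\<in>insert u ` Pow U. (-1) ^ (card (insert u U) - card V) * f (w + (\<Sum>u\<in>V. H (g u))))
        = (\<Sum>V\<in>Pow U. (-1) ^ (card U - card V) * f (w + ?h + (\<Sum>u\<in>V. H (g u))))"
    proof (subst sum.reindex[OF inj], rule sum.cong[OF refl])
      fix V assume V: "V \<in> Pow U"
      then have "u \<notin> V" "finite V" using insert.hyps finite_subset by auto
      then show "((\<lambda>V. (-1) ^ (card (insert u U) - card V) * f (w + (\<Sum>u\<in>V. H (g u)))) \<circ> insert u) V
          = (-1) ^ (card U - card V) * f (w + ?h + (\<Sum>u\<in>V. H (g u)))"
        using insert.hyps by (simp add: add.assoc)
    qed
    have B: "(\<Sum>V\<in>Pow U. (-1) ^ (card (insert u U) - card V) * f (w + (\<Sum>u\<in>V. H (g u))))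
        = - (\<Sum>V\<in>Pow U. (-1) ^ (card U - card V) * f (w + (\<Sum>u\<in>V. H (g u))))"
    proof -
      have "\<And>V. V \<in> Pow U \<Longrightarrow> (-1::'b) ^ (card (insert u U) - card V) = - ((-1) ^ (card U - card V))"
        using insert.hyps cardV by (simp add: Suc_diff_le)
      then show ?thesis by (simp add: sum_negf[symmetric])
    qed
    show ?thesis using A B by simp
  qed
  also have "\<dots> = (\<Sum>V\<in>Pow (insert u U). (-1) ^ (card (insert u U) - card V) * f (w + (\<Sum>u\<in>V. H (g u))))"
    unfolding Pow_insert using sum.union_disjoint[OF fin _ disj, of "\<lambda>V. (-1) ^ (card (insert u U) - card V) * f (w + (\<Sum>u\<in>V. H (g u)))"] fin
    by (simp add: add.commute)
  finally show ?case .
qed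

definition smul :: "'b::comm_ring_1 \<Rightarrow> ('x \<Rightarrow> 'b) \<Rightarrow> ('x \<Rightarrow> 'b)" where
  "smul a g = (\<lambda>z. a * g z)"

lemma smul_add1: "smul (a + 1) g = smul a g + g"
  by (auto simp: smul_def algebra_simps)
lemma smul_0 [simp]: "smul 0 g = 0"
  by (auto simp: smul_def)

context
  assumes BR: "binomial_ring TYPE('b::comm_ring_1)"
begin

definition NPL :: "nat \<Rightarrow> (('x \<Rightarrow> 'b) \<Rightarrow> 'b) \<Rightarrow> bool" where
  "NPL m f \<longleftrightarrow> (\<forall>u g. NP m (\<lambda>a. f (u + smul a g)))"

definition Pm :: "nat \<Rightarrow> (('x \<Rightarrow> 'b) \<Rightarrow> 'b) \<Rightarrow> bool" where
  "Pm m f \<longleftrightarrow> NPL m f \<and> zdeg m f"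

lemma dif1_line: fixes F :: "('x \<Rightarrow> 'b) \<Rightarrow> 'b" shows "(dif1 ^^ d) (\<lambda>a. F (u + smul a g)) = (\<lambda>a. ((dif g) ^^ d) F (u + smul a g))"
proof (induction d)
  case 0 then show ?case by simp
next
  case (Suc d)
  show ?case
  proof
    fix a
    have "(dif1 ^^ Suc d) (\<lambda>a. F (u + smul a g)) a
        = ((dif g ^^ d) F) (u + smul (a + 1) g) - ((dif g ^^ d) F) (u + smul a g)"
      by (simp only: funpow.simps o_apply Suc.IH dif1_def[OF BR])
    also have "\<dots> = (dif g ^^ Suc d) F (u + smul a g)"
      by (simp add: smul_add1 dif_def add.assoc)
    finally show "(dif1 ^^ Suc d) (\<lambda>a. F (u + smul a g)) a = (dif g ^^ Suc d) F (u + smul a g)" .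
  qed
qed

lemma NPL_newton: "NPL m f \<Longrightarrow> f (u + smul a g) = (\<Sum>d\<le>m. ((dif g) ^^ d) f u * bin a d)"
proof -
  assume "NPL m f"
  then have "NP m (\<lambda>a. f (u + smul a g))" unfolding NPL_def by blast
  from NP_newton[OF BR this] show ?thesis by (simp add: dif1_line)
qed

lemma Pm_add: "Pm m f \<Longrightarrow> Pm m g \<Longrightarrow> Pm m (\<lambda>w. f w + g w)"
  unfolding Pm_def NPL_def using NP_add[OF BR] zdeg_add by blast
lemma Pm_scale: "Pm m f \<Longrightarrow> Pm m (\<lambda>w. c * f w)"
  unfolding Pm_def NPL_def using NP_scale[OF BR] zdeg_scale by blast
lemma Pm_const: "Pm m (\<lambda>w. c)"
  unfolding Pm_def NPL_def using NP_const[OF BR] zdeg_const by blast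
lemma Pm_mono: "Pm m f \<Longrightarrow> m \<le> m' \<Longrightarrow> Pm m' f"
  unfolding Pm_def NPL_def using NP_mono[OF BR] zdeg_mono by blast
lemma Pm_sum: "finite I \<Longrightarrow> (\<And>i. i \<in> I \<Longrightarrow> Pm m (f i)) \<Longrightarrow> Pm m (\<lambda>w. \<Sum>i\<in>I. f i w)"
proof (induction I rule: finite_induct)
  case empty then show ?case using Pm_const[of m 0] by simp
next
  case (insert x F) then show ?case using Pm_add[of m "f x" "\<lambda>w. \<Sum>i\<in>F. f i w"] by simp
qed
lemma Pm_mult: "Pm m1 f \<Longrightarrow> Pm m2 g \<Longrightarrow> Pm (m1 + m2) (\<lambda>w. f w * g w)"
  unfolding Pm_def NPL_def using NP_mult[OF BR] zdeg_mult by blast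

lemma Pm_comp:
  assumes "\<And>x y. L (x + y) = L x + L y" "\<And>a g. L (smul a g) = smul a (L g)"
  shows "Pm m f \<Longrightarrow> Pm m (\<lambda>w. f (L w))"
  unfolding Pm_def NPL_def using zdeg_comp[of L m f] assms by auto

lemma Pm_dif: assumes "Pm (Suc m) f" shows "Pm m (dif h f)"
proof -
  have z: "zdeg m (dif h f)" using assms unfolding Pm_def by simp
  have "NP m (\<lambda>a. dif h f (u + smul a g))" for u g
  proof (rule NP_reduce[OF BR])
    have "(\<lambda>a. dif h f (u + smul a g)) = (\<lambda>a. f ((u + h) + smul a g) - f (u + smul a g))"
      by (auto simp: dif_def add_ac)
    moreover have "NP (Suc m) (\<lambda>a. f ((u + h) + smul a g))" "NP (Suc m) (\<lambda>a. f (u + smul a g))"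
      using assms unfolding Pm_def NPL_def by blast+
    ultimately show "NP (Suc m) (\<lambda>a. dif h f (u + smul a g))"
      using NP_diff[OF BR] by simp
    show "(dif1 ^^ Suc m) (\<lambda>a. dif h f (u + smul a g)) 0 = 0"
      unfolding dif1_line using zdeg_dif_pow[OF z, of g] by simp
  qed
  then show ?thesis using z unfolding Pm_def NPL_def by blast
qed

lemma Pm0_dif: "Pm 0 f \<Longrightarrow> dif h f = (\<lambda>w. 0)"
  unfolding Pm_def using zdeg0_dif by blast

lemma Pm_dif_pow: "Pm m f \<Longrightarrow> d \<le> m \<Longrightarrow> Pm (m - d) ((dif g ^^ d) f)"
proof (induction d)
  case 0 then show ?case by simp
next
  case (Suc d)
  then have "Pm (Suc (m - Suc d)) ((dif g ^^ d) f)" by (simp add: Suc_diff_Suc)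
  then show ?case by (simp add: Pm_dif)
qed

lemma Pm_dif_pow_big: "Pm m f \<Longrightarrow> m < d \<Longrightarrow> (dif g ^^ d) f = (\<lambda>w. 0)"
proof -
  assume "Pm m f" "m < d"
  define e where "e = d - Suc m"
  have e: "d = e + Suc m" using \<open>m < d\<close> unfolding e_def by arith
  have "(dif g ^^ Suc m) f = (\<lambda>w. 0)" using \<open>Pm m f\<close> zdeg_dif_pow unfolding Pm_def by blast
  moreover have "(dif g ^^ e) (\<lambda>w. 0) = (\<lambda>w. 0)" by (induction e) (simp_all add: dif_def)
  moreover have "(dif g ^^ (e + Suc m)) f = (dif g ^^ e) ((dif g ^^ Suc m) f)" by (simp only: funpow_add o_apply)
  ultimately show ?thesis unfolding e by simp
qed

lemma vandermonde: "bin (t + s) k = (\<Sum>d\<le>k. bin s d * bin (t::'b) (k - d))"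
proof -
  let ?\<chi> = "\<lambda>a. bin (t + a) k"
  have NPc: "NP k ?\<chi>" using NP_bin_affine[OF BR, where u = t and c = 1 and k = k] by simp
  have D: "d \<le> k \<Longrightarrow> (dif1 ^^ d) ?\<chi> = (\<lambda>a. bin (t + a) (k - d))" for d
  proof (induction d)
    case 0 then show ?case by simp
  next
    case (Suc d)
    have j: "k - d = Suc (k - Suc d)" using Suc.prems by arith
    have IH: "(dif1 ^^ d) ?\<chi> = (\<lambda>a. bin (t + a) (k - d))" using Suc by simp
    show ?case
    proof
      fix a
      have "(dif1 ^^ Suc d) ?\<chi> a = bin (t + a + 1) (Suc (k - Suc d)) - bin (t + a) (Suc (k - Suc d))"
        using IH j by (simp add: dif1_def[OF BR] add.assoc)
      also have "\<dots> = bin (t + a) (k - Suc d)" by (simp add: bin_pascal[OF BR])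
      finally show "(dif1 ^^ Suc d) ?\<chi> a = bin (t + a) (k - Suc d)" .
    qed
  qed
  have "bin (t + s) k = (\<Sum>d\<le>k. (dif1 ^^ d) ?\<chi> 0 * bin s d)" using NP_newton[OF BR NPc, of s] by simp
  also have "\<dots> = (\<Sum>d\<le>k. bin s d * bin t (k - d))"
    by (rule sum.cong[OF refl]) (simp add: D)
  finally show ?thesis .
qed

lemma zdeg_coord: "zdeg k (\<lambda>w::'x \<Rightarrow> 'b. bin (w z) k)"
proof (induction k rule: less_induct)
  case (less k)
  show ?case
  proof (cases k)
    case 0 then show ?thesis using zdeg_const by (simp add: bin_0[OF BR])
  next
    case (Suc j)
    have "zdeg j (dif h (\<lambda>w. bin (w z) k))" for h :: "'x \<Rightarrow> 'b"
    proof -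
      have eq: "dif h (\<lambda>w. bin (w z) k) = (\<lambda>w. \<Sum>d\<le>j. bin (h z) (Suc d) * bin (w z) (j - d))"
      proof
        fix w :: "'x \<Rightarrow> 'b"
        have "dif h (\<lambda>w. bin (w z) k) w = (\<Sum>d\<le>k. bin (h z) d * bin (w z) (k - d)) - bin (w z) k"
          by (simp add: dif_def vandermonde)
        also have "\<dots> = (\<Sum>d\<le>j. bin (h z) (Suc d) * bin (w z) (j - d))"
          using Suc by (simp only: sum.atMost_Suc_shift) (simp add: bin_0[OF BR] del: sum.atMost_Suc)
        finally show "dif h (\<lambda>w. bin (w z) k) w = (\<Sum>d\<le>j. bin (h z) (Suc d) * bin (w z) (j - d))" .
      qed
      show ?thesis unfolding eq
      proof (rule zdeg_sum)
        fix d assume "d \<in> {..j}"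
        have "j - d < k" using Suc by simp
        then have "zdeg (j - d) (\<lambda>w::'x \<Rightarrow> 'b. bin (w z) (j - d))" by (rule less)
        then have "zdeg j (\<lambda>w::'x \<Rightarrow> 'b. bin (w z) (j - d))" by (rule zdeg_mono) simp
        then show "zdeg j (\<lambda>w. bin (h z) (Suc d) * bin (w z) (j - d))"
          by (rule zdeg_scale)
      qed simp
    qed
    then show ?thesis using Suc by simp
  qed
qed

lemma Pm_coord: "Pm k (\<lambda>w::'x \<Rightarrow> 'b. bin (w z) k)"
  unfolding Pm_def NPL_def
proof (intro conjI allI zdeg_coord)
  fix u g :: "'x \<Rightarrow> 'b"
  show "NP k (\<lambda>a. bin ((u + smul a g) z) k)"
    using NP_bin_affine[OF BR, where u = "u z" and c = "g z" and k = k] by (simp add: smul_def plus_fun_def)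
qed

lemma Pm_prod: "finite Z \<Longrightarrow> Pm (\<Sum>z\<in>Z. k z) (\<lambda>w::'x \<Rightarrow> 'b. \<Prod>z\<in>Z. bin (w z) (k z))"
proof (induction Z rule: finite_induct)
  case empty then show ?case using Pm_const[of 0 1] by simp
next
  case (insert x F)
  then show ?case using Pm_mult[OF Pm_coord[of "k x" x] insert.IH] by simp
qed

end

lemma alt_pow: "finite A \<Longrightarrow> (\<Sum>X\<in>Pow A. (-1::'b::comm_ring_1) ^ card X) = (if A = {} then 1 else 0)"
proof (induction A rule: finite_induct)
  case empty then show ?case by simp
next
  case (insert a A)
  have fin: "finite (Pow A)" using insert by simp
  have inj: "inj_on (insert a) (Pow A)" using insert.hyps by (auto simp: inj_on_def)
  have disj: "Pow A \<inter> insert a ` Pow A = {}" using insert.hyps by auto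
  have "(\<Sum>X\<in>insert a ` Pow A. (-1::'b) ^ card X) = (\<Sum>X\<in>Pow A. (-1::'b) ^ card (insert a X))"
    by (simp add: sum.reindex[OF inj])
  also have "\<dots> = - (\<Sum>X\<in>Pow A. (-1::'b) ^ card X)"
  proof -
    have "(-1::'b) ^ card (insert a X) = - ((-1) ^ card X)" if "X \<in> Pow A" for X
    proof -
      have "finite X" "a \<notin> X" using that insert.hyps finite_subset by auto
      then show ?thesis by simp
    qed
    then show ?thesis by (simp add: sum_negf[symmetric])
  qed
  finally have "(\<Sum>X\<in>Pow (insert a A). (-1::'b) ^ card X) = 0"
    unfolding Pow_insert using sum.union_disjoint[OF fin _ disj, of "\<lambda>X. (-1::'b) ^ card X"] fin by simp
  then show ?case by simp
qed

lemma alt_interval: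
  assumes "finite I" "R \<subseteq> I"
  shows "(\<Sum>S\<in>Pow I. if R \<subseteq> S then (-1::'b::comm_ring_1) ^ (card I - card S) else 0) = (if R = I then 1 else 0)"
proof -
  have eqset: "{S \<in> Pow I. R \<subseteq> S} = (\<lambda>X. I - X) ` Pow (I - R)"
  proof
    show "{S \<in> Pow I. R \<subseteq> S} \<subseteq> (\<lambda>X. I - X) ` Pow (I - R)"
    proof
      fix S assume "S \<in> {S \<in> Pow I. R \<subseteq> S}"
      then have "S = I - (I - S)" "I - S \<in> Pow (I - R)" by auto
      then show "S \<in> (\<lambda>X. I - X) ` Pow (I - R)" by blast
    qed
    show "(\<lambda>X. I - X) ` Pow (I - R) \<subseteq> {S \<in> Pow I. R \<subseteq> S}" using assms by auto
  qed
  have inj: "inj_on (\<lambda>X. I - X) (Pow (I - R))"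
  proof (rule inj_onI)
    fix X Y assume "X \<in> Pow (I - R)" "Y \<in> Pow (I - R)" "I - X = I - Y"
    then have "X = I - (I - X)" "Y = I - (I - Y)" by auto
    then show "X = Y" using \<open>I - X = I - Y\<close> by simp
  qed
  have "(\<Sum>S\<in>Pow I. if R \<subseteq> S then (-1::'b) ^ (card I - card S) else 0)
      = (\<Sum>S\<in>{S \<in> Pow I. R \<subseteq> S}. (-1::'b) ^ (card I - card S))"
    by (rule sum.inter_filter[symmetric]) (use assms in simp)
  also have "\<dots> = (\<Sum>S\<in>(\<lambda>X. I - X) ` Pow (I - R). (-1::'b) ^ (card I - card S))"
    by (simp only: eqset)
  also have "\<dots> = (\<Sum>X\<in>Pow (I - R). (-1::'b) ^ card X)"
  proof (subst sum.reindex[OF inj], rule sum.cong[OF refl])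
    fix X assume "X \<in> Pow (I - R)"
    then have "X \<subseteq> I" by auto
    then have "finite X" using assms(1) by (rule finite_subset)
    have "card (I - X) = card I - card X" using \<open>finite X\<close> \<open>X \<subseteq> I\<close> by (rule card_Diff_subset)
    moreover have "card X \<le> card I" using \<open>X \<subseteq> I\<close> assms(1) by (rule card_mono[rotated])
    ultimately show "((\<lambda>S. (-1::'b) ^ (card I - card S)) \<circ> (\<lambda>X. I - X)) X = (-1) ^ card X" by simp
  qed
  also have "\<dots> = (if I - R = {} then 1 else 0)" by (rule alt_pow) (use assms in simp)
  also have "\<dots> = (if R = I then 1 else 0)" using assms by auto
  finally show ?thesis .
qed

lemma mobius:
  assumes "finite W"
  shows "(\<Sum>U\<in>Pow W. \<Sum>V\<in>Pow U. (-1::'b::comm_ring_1) ^ (card U - card V) * g V) = g W"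
proof -
  have "(\<Sum>U\<in>Pow W. \<Sum>V\<in>Pow U. (-1::'b) ^ (card U - card V) * g V)
      = (\<Sum>U\<in>Pow W. \<Sum>V\<in>{V. V \<in> Pow W \<and> V \<subseteq> U}. (-1::'b) ^ (card U - card V) * g V)"
  proof (rule sum.cong[OF refl])
    fix U assume "U \<in> Pow W"
    then have "Pow U = {V. V \<in> Pow W \<and> V \<subseteq> U}" by auto
    then show "(\<Sum>V\<in>Pow U. (-1::'b) ^ (card U - card V) * g V) = (\<Sum>V\<in>{V. V \<in> Pow W \<and> V \<subseteq> U}. (-1::'b) ^ (card U - card V) * g V)"
      by simp
  qed
  also have "\<dots> = (\<Sum>V\<in>Pow W. \<Sum>U\<in>{U. U \<in> Pow W \<and> V \<subseteq> U}. (-1::'b) ^ (card U - card V) * g V)"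
    by (rule sum.swap_restrict) (use assms in auto)
  also have "\<dots> = (\<Sum>V\<in>Pow W. (if V = W then 1 else 0) * g V)"
  proof (rule sum.cong[OF refl])
    fix V assume V: "V \<in> Pow W"
    have "V \<subseteq> W" using V by simp
    then have finV: "finite V" using assms by (rule finite_subset)
    have "{U. U \<in> Pow W \<and> V \<subseteq> U} = (\<lambda>X. V \<union> X) ` Pow (W - V)"
    proof
      show "{U. U \<in> Pow W \<and> V \<subseteq> U} \<subseteq> (\<lambda>X. V \<union> X) ` Pow (W - V)"
      proof
        fix U assume "U \<in> {U. U \<in> Pow W \<and> V \<subseteq> U}"
        then have "U = V \<union> (U - V)" "U - V \<in> Pow (W - V)" by auto
        then show "U \<in> (\<lambda>X. V \<union> X) ` Pow (W - V)" by blast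
      qed
      show "(\<lambda>X. V \<union> X) ` Pow (W - V) \<subseteq> {U. U \<in> Pow W \<and> V \<subseteq> U}" using V by auto
    qed
    moreover have inj: "inj_on (\<lambda>X. V \<union> X) (Pow (W - V))"
    proof (rule inj_onI)
      fix X Y assume "X \<in> Pow (W - V)" "Y \<in> Pow (W - V)" "V \<union> X = V \<union> Y"
      then have "X = (V \<union> X) - V" "Y = (V \<union> Y) - V" by auto
      then show "X = Y" using \<open>V \<union> X = V \<union> Y\<close> by simp
    qed
    ultimately have "(\<Sum>U\<in>{U. U \<in> Pow W \<and> V \<subseteq> U}. (-1::'b) ^ (card U - card V))
        = (\<Sum>X\<in>Pow (W - V). (-1::'b) ^ (card (V \<union> X) - card V))"
      by (simp add: sum.reindex)
    also have "\<dots> = (\<Sum>X\<in>Pow (W - V). (-1::'b) ^ card X)"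
    proof (rule sum.cong[OF refl])
      fix X assume "X \<in> Pow (W - V)"
      then have "X \<subseteq> W" "V \<inter> X = {}" by auto
      then have "finite X" "V \<inter> X = {}" using assms finite_subset by auto
      then show "(-1::'b) ^ (card (V \<union> X) - card V) = (-1) ^ card X"
        using finV by (simp add: card_Un_disjoint)
    qed
    also have "\<dots> = (if W - V = {} then 1 else 0)" by (rule alt_pow) (use assms in simp)
    also have "\<dots> = (if V = W then 1 else 0)" using V by auto
    finally show "(\<Sum>U\<in>{U. U \<in> Pow W \<and> V \<subseteq> U}. (-1::'b) ^ (card U - card V) * g V) = (if V = W then 1 else 0) * g V"
      by (simp add: sum_distrib_right[symmetric])
  qed
  also have "\<dots> = (\<Sum>V\<in>Pow W. if V = W then g V else 0)" by (rule sum.cong) auto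
  also have "\<dots> = g W" using assms by (simp add: sum.delta')
  finally show ?thesis .
qed

lemma comb:
  fixes I :: "'i set" and J :: "'j set" and CP :: "('i \<times> 'j) set"
  assumes "finite I" "finite J" "CP \<subseteq> I \<times> J"
  shows "(\<Sum>U\<in>{U. U \<subseteq> CP \<and> fst ` U = I \<and> snd ` U = J}. \<Sum>V\<in>Pow U. (-1::'b::comm_ring_1) ^ (card U - card V) * g V)
    = (\<Sum>S\<in>Pow I. \<Sum>T\<in>Pow J. (-1) ^ (card I - card S) * (-1) ^ (card J - card T) * g (CP \<inter> S \<times> T))"
proof -
  define F where "F U = (\<Sum>V\<in>Pow U. (-1::'b) ^ (card U - card V) * g V)" for U
  define sI where "sI S = (-1::'b) ^ (card I - card S)" for S :: "'i set"
  define sJ where "sJ T = (-1::'b) ^ (card J - card T)" for T :: "'j set"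
  have finCP: "finite CP" using assms finite_subset[OF assms(3)] by auto
  have "(\<Sum>U\<in>{U. U \<subseteq> CP \<and> fst ` U = I \<and> snd ` U = J}. F U)
      = (\<Sum>U\<in>Pow CP. (if fst ` U = I then 1 else 0) * (if snd ` U = J then 1 else 0) * F U)"
  proof -
    have e: "{U. U \<subseteq> CP \<and> fst ` U = I \<and> snd ` U = J} = {U \<in> Pow CP. fst ` U = I \<and> snd ` U = J}" by auto
    have "(\<Sum>U\<in>{U \<in> Pow CP. fst ` U = I \<and> snd ` U = J}. F U) = (\<Sum>U\<in>Pow CP. if fst ` U = I \<and> snd ` U = J then F U else 0)"
      by (rule sum.inter_filter) (simp add: finCP)
    also have "\<dots> = (\<Sum>U\<in>Pow CP. (if fst ` U = I then 1 else 0) * (if snd ` U = J then 1 else 0) * F U)"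
      by (rule sum.cong) auto
    finally show ?thesis unfolding e .
  qed
  also have "\<dots> = (\<Sum>U\<in>Pow CP. (\<Sum>S\<in>Pow I. if fst ` U \<subseteq> S then sI S else 0)
                      * (\<Sum>T\<in>Pow J. if snd ` U \<subseteq> T then sJ T else 0) * F U)"
  proof (rule sum.cong[OF refl])
    fix U assume "U \<in> Pow CP"
    then have "fst ` U \<subseteq> I" "snd ` U \<subseteq> J" using assms(3) by auto
    then show "(if fst ` U = I then 1 else 0) * (if snd ` U = J then 1 else 0) * F U
        = (\<Sum>S\<in>Pow I. if fst ` U \<subseteq> S then sI S else 0) * (\<Sum>T\<in>Pow J. if snd ` U \<subseteq> T then sJ T else 0) * F U"
    proof -
      have a: "(if fst ` U = I then 1 else 0) = (\<Sum>S\<in>Pow I. if fst ` U \<subseteq> S then sI S else (0::'b))"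
        unfolding sI_def by (rule alt_interval[symmetric]) (use assms \<open>fst ` U \<subseteq> I\<close> in auto)
      have b: "(if snd ` U = J then 1 else 0) = (\<Sum>T\<in>Pow J. if snd ` U \<subseteq> T then sJ T else (0::'b))"
        unfolding sJ_def by (rule alt_interval[symmetric]) (use assms \<open>snd ` U \<subseteq> J\<close> in auto)
      show ?thesis by (simp only: a b)
    qed
  qed
  also have "\<dots> = (\<Sum>U\<in>Pow CP. \<Sum>S\<in>Pow I. \<Sum>T\<in>Pow J. (if U \<subseteq> S \<times> T then sI S * sJ T * F U else 0))"
  proof (rule sum.cong[OF refl])
    fix U
    have "(\<Sum>S\<in>Pow I. if fst ` U \<subseteq> S then sI S else 0) * (\<Sum>T\<in>Pow J. if snd ` U \<subseteq> T then sJ T else 0) * F U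
        = (\<Sum>S\<in>Pow I. \<Sum>T\<in>Pow J. (if fst ` U \<subseteq> S then sI S else 0) * (if snd ` U \<subseteq> T then sJ T else 0) * F U)"
      by (simp add: sum_distrib_right sum_distrib_left) (rule sum.swap)
    also have "\<dots> = (\<Sum>S\<in>Pow I. \<Sum>T\<in>Pow J. (if U \<subseteq> S \<times> T then sI S * sJ T * F U else 0))"
      by (intro sum.cong refl) auto
    finally show "(\<Sum>S\<in>Pow I. if fst ` U \<subseteq> S then sI S else 0) * (\<Sum>T\<in>Pow J. if snd ` U \<subseteq> T then sJ T else 0) * F U
        = (\<Sum>S\<in>Pow I. \<Sum>T\<in>Pow J. (if U \<subseteq> S \<times> T then sI S * sJ T * F U else 0))" .
  qed
  also have "\<dots> = (\<Sum>S\<in>Pow I. \<Sum>T\<in>Pow J. \<Sum>U\<in>Pow CP. (if U \<subseteq> S \<times> T then sI S * sJ T * F U else 0))"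
    by (subst sum.swap) (rule sum.cong[OF refl], rule sum.swap)
  also have "\<dots> = (\<Sum>S\<in>Pow I. \<Sum>T\<in>Pow J. sI S * sJ T * g (CP \<inter> S \<times> T))"
  proof (intro sum.cong refl)
    fix S T
    have "(\<Sum>U\<in>Pow CP. (if U \<subseteq> S \<times> T then sI S * sJ T * F U else 0))
        = (\<Sum>U\<in>{U \<in> Pow CP. U \<subseteq> S \<times> T}. sI S * sJ T * F U)"
      by (rule sum.inter_filter[symmetric]) (simp add: finCP)
    also have "{U \<in> Pow CP. U \<subseteq> S \<times> T} = Pow (CP \<inter> S \<times> T)" by auto
    also have "(\<Sum>U\<in>Pow (CP \<inter> S \<times> T). sI S * sJ T * F U) = sI S * sJ T * (\<Sum>U\<in>Pow (CP \<inter> S \<times> T). F U)"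
      by (simp add: sum_distrib_left)
    also have "(\<Sum>U\<in>Pow (CP \<inter> S \<times> T). F U) = g (CP \<inter> S \<times> T)"
      unfolding F_def by (rule mobius) (use finCP in simp)
    finally show "(\<Sum>U\<in>Pow CP. (if U \<subseteq> S \<times> T then sI S * sJ T * F U else 0)) = sI S * sJ T * g (CP \<inter> S \<times> T)" .
  qed
  finally show ?thesis unfolding F_def sI_def sJ_def .
qed

definition Tp :: "('a \<times> 'a \<times> 'b::comm_ring_1) \<Rightarrow> ('a \<times> 'a \<Rightarrow> 'b) \<Rightarrow> ('a \<times> 'a \<Rightarrow> 'b)" where
  "Tp p v = (\<lambda>z. if fst z = fst p then snd (snd p) * v (fst (snd p), snd z) else 0)"

lemma Tp_add: "Tp p (v + w) = Tp p v + Tp p w"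
  by (auto simp: Tp_def plus_fun_def algebra_simps)
lemma Tp_zero: "Tp p 0 = 0"
  by (auto simp: Tp_def)
lemma Tp_sum: "Tp p (\<Sum>i\<in>S. f i) = (\<Sum>i\<in>S. Tp p (f i))"
proof (induction S rule: infinite_finite_induct)
  case (infinite A) then show ?case by (auto simp: Tp_def)
next
  case empty then show ?case by (auto simp: Tp_def)
next
  case (insert x F) then show ?case by (simp only: sum.insert[OF insert.hyps] Tp_add insert.IH)
qed
lemma Tp_smul: "Tp p (smul a v) = smul a (Tp p v)"
  by (auto simp: Tp_def smul_def algebra_simps)
lemma Tp_comp: "Tp q (Tp p v) = (if fst p = fst (snd q) then Tp (fst q, fst (snd p), snd (snd p) * snd (snd q)) v else 0)"
  by (auto simp: Tp_def algebra_simps)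
lemma Tp_label: "Tp (x, y, a) v = smul a (Tp (x, y, 1) v)"
  by (auto simp: Tp_def smul_def)
lemma Tp_label0: "Tp (x, y, 0) v = 0"
  by (auto simp: Tp_def)
lemma Tp_label_add: "Tp (x, y, a + b) v = Tp (x, y, a) v + Tp (x, y, b) v"
  by (auto simp: Tp_def algebra_simps)

definition DM :: "('a, 'b::comm_ring_1) maze \<Rightarrow> (('a \<times> 'a \<Rightarrow> 'b) \<Rightarrow> 'b) \<Rightarrow> ('a \<times> 'a \<Rightarrow> 'b) \<Rightarrow> 'b" where
  "DM M \<phi> v = Dh (\<lambda>p. Tp p v) M \<phi> 0"

lemma mset_nth: "mset xs = image_mset (nth xs) (mset_set {..<length xs})"
proof -
  have "mset xs = mset (map (nth xs) [0..<length xs])" by (simp add: map_nth)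
  also have "\<dots> = image_mset (nth xs) (mset_set {..<length xs})" by (simp add: atLeast0LessThan)
  finally show ?thesis .
qed

lemma some_mset: "mset (SOME ps. mset ps = P) = P"
  using someI_ex[OF ex_mset[of P]] .

lemma comp_pairs_sub: "comp_pairs ps qs \<subseteq> {..<length ps} \<times> {..<length qs}"
  by (auto simp: comp_pairs_def)

lemma finite_comp_subsets: "finite (comp_subsets ps qs)"
proof -
  have "comp_subsets ps qs \<subseteq> Pow (comp_pairs ps qs)" by (auto simp: comp_subsets_def)
  moreover have "finite (comp_pairs ps qs)" using comp_pairs_sub finite_subset by blast
  ultimately show ?thesis using finite_subset by blast
qed

lemma comp_maze_eq:
  "comp_maze P Q = (\<lambda>M. of_nat (card {U \<in> comp_subsets (SOME ps. mset ps = P) (SOME qs. mset qs = Q).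
       maze_of (SOME ps. mset ps = P) (SOME qs. mset qs = Q) U = M}))"
  by (simp add: comp_maze_def Let_def)

lemma supp_comp_maze:
  "supp (comp_maze P Q) \<subseteq> maze_of (SOME ps. mset ps = P) (SOME qs. mset qs = Q) ` comp_subsets (SOME ps. mset ps = P) (SOME qs. mset qs = Q)"
proof
  fix x assume "x \<in> supp (comp_maze P Q)"
  then have "{U \<in> comp_subsets (SOME ps. mset ps = P) (SOME qs. mset qs = Q).
       maze_of (SOME ps. mset ps = P) (SOME qs. mset qs = Q) U = x} \<noteq> {}"
    unfolding comp_maze_eq supp_def by (auto simp del: Collect_empty_eq)
  then show "x \<in> maze_of (SOME ps. mset ps = P) (SOME qs. mset qs = Q) ` comp_subsets (SOME ps. mset ps = P) (SOME qs. mset qs = Q)"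
    by blast
qed

lemma finite_supp_comp_maze: "finite (supp (comp_maze P Q))"
  using supp_comp_maze finite_comp_subsets finite_subset by blast

lemma sum_supp_comp_maze:
  "(\<Sum>M\<in>supp (comp_maze P Q). comp_maze P Q M * G M)
   = (\<Sum>U\<in>comp_subsets (SOME ps. mset ps = P) (SOME qs. mset qs = Q).
        G (maze_of (SOME ps. mset ps = P) (SOME qs. mset qs = Q) U))"
proof -
  define ps where "ps = (SOME ps. mset ps = P)"
  define qs where "qs = (SOME qs. mset qs = Q)"
  define CS where "CS = comp_subsets ps qs"
  define mo where "mo = maze_of ps qs"
  have fin: "finite CS" unfolding CS_def by (rule finite_comp_subsets)
  have cm: "comp_maze P Q M = of_nat (card {U \<in> CS. mo U = M})" for M
    unfolding comp_maze_eq ps_def qs_def CS_def mo_def by simp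
  have "(\<Sum>M\<in>supp (comp_maze P Q). comp_maze P Q M * G M) = (\<Sum>M\<in>mo ` CS. comp_maze P Q M * G M)"
  proof (rule sum.mono_neutral_left)
    show "finite (mo ` CS)" using fin by simp
    show "supp (comp_maze P Q) \<subseteq> mo ` CS" using supp_comp_maze unfolding ps_def qs_def CS_def mo_def .
    show "\<forall>i\<in>mo ` CS - supp (comp_maze P Q). comp_maze P Q i * G i = 0" by (auto simp: supp_def)
  qed
  also have "\<dots> = (\<Sum>M\<in>mo ` CS. \<Sum>U\<in>{U \<in> CS. mo U = M}. G (mo U))"
    by (rule sum.cong[OF refl]) (simp add: cm)
  also have "\<dots> = (\<Sum>U\<in>CS. G (mo U))"
    by (rule sum.image_gen[symmetric]) (rule fin)
  finally show ?thesis unfolding ps_def qs_def CS_def mo_def .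
qed

lemma Tp_sum_comp:
  assumes "S \<subseteq> {..<length ps}" "T \<subseteq> {..<length qs}"
  shows "(\<Sum>j\<in>T. Tp (qs ! j) (\<Sum>i\<in>S. Tp (ps ! i) v))
       = (\<Sum>x\<in>comp_pairs ps qs \<inter> S \<times> T. Tp ((\<lambda>(i, j). (fst (qs ! j), fst (snd (ps ! i)), snd (snd (ps ! i)) * snd (snd (qs ! j)))) x) v)"
proof -
  let ?c = "\<lambda>(i, j). (fst (qs ! j), fst (snd (ps ! i)), snd (snd (ps ! i)) * snd (snd (qs ! j)))"
  have finS: "finite S" and finT: "finite T" using assms finite_subset by auto
  have "(\<Sum>j\<in>T. Tp (qs ! j) (\<Sum>i\<in>S. Tp (ps ! i) v)) = (\<Sum>j\<in>T. \<Sum>i\<in>S. Tp (qs ! j) (Tp (ps ! i) v))"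
    by (simp add: Tp_sum)
  also have "\<dots> = (\<Sum>i\<in>S. \<Sum>j\<in>T. Tp (qs ! j) (Tp (ps ! i) v))" by (rule sum.swap)
  also have "\<dots> = (\<Sum>x\<in>S \<times> T. Tp (qs ! snd x) (Tp (ps ! fst x) v))"
    by (simp add: sum.cartesian_product case_prod_beta)
  also have "\<dots> = (\<Sum>x\<in>S \<times> T. if x \<in> comp_pairs ps qs then Tp (?c x) v else 0)"
  proof (rule sum.cong[OF refl])
    fix x assume "x \<in> S \<times> T"
    then have "fst x < length ps" "snd x < length qs" using assms by auto
    then show "Tp (qs ! snd x) (Tp (ps ! fst x) v) = (if x \<in> comp_pairs ps qs then Tp (?c x) v else 0)"
      by (auto simp: Tp_comp comp_pairs_def case_prod_beta)
  qed
  also have "\<dots> = (\<Sum>x\<in>S \<times> T \<inter> comp_pairs ps qs. Tp (?c x) v)"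
    by (rule sum.inter_restrict[symmetric]) (simp add: finS finT)
  finally show ?thesis by (simp add: Int_commute)
qed

lemma DM_comp:
  fixes P Q :: "('a, 'b::comm_ring_1) maze"
  shows "(\<Sum>M\<in>supp (comp_maze P Q). comp_maze P Q M * DM M \<phi> v) = DM P (\<lambda>u. DM Q \<phi> u) v"
proof -
  define ps where "ps = (SOME ps. mset ps = P)"
  define qs where "qs = (SOME qs. mset qs = Q)"
  define I where "I = {..<length ps}"
  define J where "J = {..<length qs}"
  define CP where "CP = comp_pairs ps qs"
  define c where "c = (\<lambda>(i, j). (fst (qs ! j), fst (snd (ps ! i)), snd (snd (ps ! i)) * snd (snd (qs ! j))))"
  define g where "g V = \<phi> (\<Sum>u\<in>V. Tp (c u) v)" for V
  have P: "P = image_mset (nth ps) (mset_set I)" unfolding I_def ps_def using some_mset mset_nth by metis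
  have Q: "Q = image_mset (nth qs) (mset_set J)" unfolding J_def qs_def using some_mset mset_nth by metis
  have CPsub: "CP \<subseteq> I \<times> J" unfolding CP_def I_def J_def by (rule comp_pairs_sub)
  have finI: "finite I" and finJ: "finite J" unfolding I_def J_def by auto
  have finCP: "finite CP" using CPsub finI finJ finite_subset by blast
  have CS: "comp_subsets ps qs = {U. U \<subseteq> CP \<and> fst ` U = I \<and> snd ` U = J}"
    unfolding comp_subsets_def CP_def I_def J_def by simp
  have mo: "maze_of ps qs U = image_mset c (mset_set U)" for U
    unfolding maze_of_def c_def by simp
  have "(\<Sum>M\<in>supp (comp_maze P Q). comp_maze P Q M * DM M \<phi> v)
      = (\<Sum>U\<in>comp_subsets ps qs. DM (maze_of ps qs U) \<phi> v)"
    unfolding ps_def qs_def by (rule sum_supp_comp_maze)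
  also have "\<dots> = (\<Sum>U\<in>{U. U \<subseteq> CP \<and> fst ` U = I \<and> snd ` U = J}. \<Sum>V\<in>Pow U. (-1) ^ (card U - card V) * g V)"
  proof (unfold CS, rule sum.cong[OF refl])
    fix U assume "U \<in> {U. U \<subseteq> CP \<and> fst ` U = I \<and> snd ` U = J}"
    then have "finite U" using finCP finite_subset by blast
    then show "DM (maze_of ps qs U) \<phi> v = (\<Sum>V\<in>Pow U. (-1) ^ (card U - card V) * g V)"
      unfolding DM_def mo g_def by (simp add: Dh_mset_set)
  qed
  also have "\<dots> = (\<Sum>S\<in>Pow I. \<Sum>T\<in>Pow J. (-1) ^ (card I - card S) * (-1) ^ (card J - card T) * g (CP \<inter> S \<times> T))"
    by (rule comb[OF finI finJ CPsub])
  also have "\<dots> = DM P (\<lambda>u. DM Q \<phi> u) v"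
  proof -
    have "DM P (\<lambda>u. DM Q \<phi> u) v = (\<Sum>S\<in>Pow I. (-1) ^ (card I - card S) * DM Q \<phi> (\<Sum>i\<in>S. Tp (ps ! i) v))"
      unfolding DM_def P using finI by (simp add: Dh_mset_set)
    also have "\<dots> = (\<Sum>S\<in>Pow I. (-1) ^ (card I - card S) *
        (\<Sum>T\<in>Pow J. (-1) ^ (card J - card T) * \<phi> (\<Sum>j\<in>T. Tp (qs ! j) (\<Sum>i\<in>S. Tp (ps ! i) v))))"
      unfolding DM_def Q using finJ by (simp add: Dh_mset_set)
    also have "\<dots> = (\<Sum>S\<in>Pow I. \<Sum>T\<in>Pow J. (-1) ^ (card I - card S) * (-1) ^ (card J - card T) * g (CP \<inter> S \<times> T))"
    proof (rule sum.cong[OF refl])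
      fix S assume S: "S \<in> Pow I"
      show "(-1) ^ (card I - card S) * (\<Sum>T\<in>Pow J. (-1) ^ (card J - card T) * \<phi> (\<Sum>j\<in>T. Tp (qs ! j) (\<Sum>i\<in>S. Tp (ps ! i) v)))
          = (\<Sum>T\<in>Pow J. (-1) ^ (card I - card S) * (-1) ^ (card J - card T) * g (CP \<inter> S \<times> T))"
      proof (subst sum_distrib_left, rule sum.cong[OF refl])
        fix T assume T: "T \<in> Pow J"
        have "(\<Sum>j\<in>T. Tp (qs ! j) (\<Sum>i\<in>S. Tp (ps ! i) v)) = (\<Sum>x\<in>CP \<inter> S \<times> T. Tp (c x) v)"
          unfolding CP_def c_def by (rule Tp_sum_comp) (use S T in \<open>auto simp: I_def J_def\<close>)
        then show "(-1) ^ (card I - card S) * ((-1) ^ (card J - card T) * \<phi> (\<Sum>j\<in>T. Tp (qs ! j) (\<Sum>i\<in>S. Tp (ps ! i) v)))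
          = (-1) ^ (card I - card S) * (-1) ^ (card J - card T) * g (CP \<inter> S \<times> T)"
          unfolding g_def by (simp add: mult.assoc)
      qed
    qed
    finally show ?thesis by simp
  qed
  finally show ?thesis .
qed

definition Dlin :: "(('a, 'b::comm_ring_1) maze \<Rightarrow> 'b) \<Rightarrow> (('a \<times> 'a \<Rightarrow> 'b) \<Rightarrow> 'b) \<Rightarrow> ('a \<times> 'a \<Rightarrow> 'b) \<Rightarrow> 'b" where
  "Dlin f \<phi> v = (\<Sum>M\<in>supp f. f M * DM M \<phi> v)"

lemma sum_supp_superset:
  fixes f :: "'m \<Rightarrow> 'b::comm_ring_1"
  shows "finite S \<Longrightarrow> supp f \<subseteq> S \<Longrightarrow> (\<Sum>M\<in>supp f. f M * G M) = (\<Sum>M\<in>S. f M * G M)"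
  by (rule sum.mono_neutral_left) (auto simp: supp_def)

lemma Dlin_superset: "finite S \<Longrightarrow> supp f \<subseteq> S \<Longrightarrow> Dlin f \<phi> v = (\<Sum>M\<in>S. f M * DM M \<phi> v)"
  unfolding Dlin_def by (rule sum_supp_superset)

lemma supp_add: fixes a b :: "'m \<Rightarrow> 'b::comm_ring_1" shows "supp (\<lambda>m. a m + b m) \<subseteq> supp a \<union> supp b"
  by (auto simp: supp_def)
lemma supp_diff: fixes a b :: "'m \<Rightarrow> 'b::comm_ring_1" shows "supp (\<lambda>m. a m - b m) \<subseteq> supp a \<union> supp b"
  by (auto simp: supp_def)
lemma supp_smult: fixes a :: "'m \<Rightarrow> 'b::comm_ring_1" shows "supp (\<lambda>m. c * a m) \<subseteq> supp a"
  by (auto simp: supp_def)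
lemma supp_delta: "supp (delta M :: _ \<Rightarrow> 'b::comm_ring_1) \<subseteq> {M}"
  by (auto simp: supp_def delta_def)
lemma finite_supp_delta: "finite (supp (delta M :: _ \<Rightarrow> 'b::comm_ring_1))"
  by (rule finite_subset[OF supp_delta]) simp
lemma finite_supp_add: fixes a b :: "'m \<Rightarrow> 'b::comm_ring_1" shows "finite (supp a) \<Longrightarrow> finite (supp b) \<Longrightarrow> finite (supp (\<lambda>m. a m + b m))"
  by (rule finite_subset[OF supp_add]) simp
lemma finite_supp_diff: fixes a b :: "'m \<Rightarrow> 'b::comm_ring_1" shows "finite (supp a) \<Longrightarrow> finite (supp b) \<Longrightarrow> finite (supp (\<lambda>m. a m - b m))"
  by (rule finite_subset[OF supp_diff]) simp
lemma finite_supp_smult: fixes a :: "'m \<Rightarrow> 'b::comm_ring_1" shows "finite (supp a) \<Longrightarrow> finite (supp (\<lambda>m. c * a m))"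
  by (rule finite_subset[OF supp_smult])
lemma finite_supp_sum: fixes f :: "'i \<Rightarrow> 'm \<Rightarrow> 'b::comm_ring_1" shows "finite I \<Longrightarrow> (\<And>i. i \<in> I \<Longrightarrow> finite (supp (f i))) \<Longrightarrow> finite (supp (\<lambda>m. \<Sum>i\<in>I. f i m))"
proof (induction I rule: finite_induct)
  case empty then show ?case by (simp add: supp_def)
next
  case (insert x F)
  then show ?case using finite_supp_add[of "f x" "\<lambda>m. \<Sum>i\<in>F. f i m"] by simp
qed

lemma Dlin_add: "finite (supp a) \<Longrightarrow> finite (supp b) \<Longrightarrow> Dlin (\<lambda>m. a m + b m) \<phi> v = Dlin a \<phi> v + Dlin b \<phi> v"
proof -
  assume fa: "finite (supp a)" and fb: "finite (supp b)"
  let ?S = "supp a \<union> supp b"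
  have "Dlin (\<lambda>m. a m + b m) \<phi> v = (\<Sum>M\<in>?S. (a M + b M) * DM M \<phi> v)"
    by (rule Dlin_superset[OF _ supp_add]) (use fa fb in simp)
  also have "\<dots> = (\<Sum>M\<in>?S. a M * DM M \<phi> v) + (\<Sum>M\<in>?S. b M * DM M \<phi> v)"
    by (simp add: distrib_right sum.distrib)
  also have "\<dots> = Dlin a \<phi> v + Dlin b \<phi> v"
    using Dlin_superset[of ?S a] Dlin_superset[of ?S b] fa fb by auto
  finally show ?thesis .
qed

lemma Dlin_smult: "finite (supp a) \<Longrightarrow> Dlin (\<lambda>m. c * a m) \<phi> v = c * Dlin a \<phi> v"
proof -
  assume fa: "finite (supp a)"
  have "Dlin (\<lambda>m. c * a m) \<phi> v = (\<Sum>M\<in>supp a. c * a M * DM M \<phi> v)"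
    by (rule Dlin_superset[OF fa supp_smult])
  also have "\<dots> = c * Dlin a \<phi> v" by (simp add: Dlin_def sum_distrib_left mult.assoc)
  finally show ?thesis .
qed

lemma Dlin_diff: "finite (supp a) \<Longrightarrow> finite (supp b) \<Longrightarrow> Dlin (\<lambda>m. a m - b m) \<phi> v = Dlin a \<phi> v - Dlin b \<phi> v"
proof -
  assume fa: "finite (supp a)" and fb: "finite (supp b)"
  have "(\<lambda>m. a m - b m) = (\<lambda>m. a m + (-1) * b m)" by simp
  then show ?thesis using Dlin_add[OF fa finite_supp_smult[OF fb, of "-1"]] Dlin_smult[OF fb, of "-1"] by simp
qed

lemma Dlin_zero: "Dlin (\<lambda>m. 0) \<phi> v = 0"
  by (simp add: Dlin_def supp_def)

lemma Dlin_sum: "finite I \<Longrightarrow> (\<And>i. i \<in> I \<Longrightarrow> finite (supp (f i))) \<Longrightarrow> Dlin (\<lambda>m. \<Sum>i\<in>I. f i m) \<phi> v = (\<Sum>i\<in>I. Dlin (f i) \<phi> v)"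
proof (induction I rule: finite_induct)
  case empty then show ?case by (simp add: Dlin_zero)
next
  case (insert x F)
  have "Dlin (\<lambda>m. \<Sum>i\<in>insert x F. f i m) \<phi> v = Dlin (\<lambda>m. f x m + (\<Sum>i\<in>F. f i m)) \<phi> v"
    using insert.hyps by simp
  also have "\<dots> = Dlin (f x) \<phi> v + Dlin (\<lambda>m. \<Sum>i\<in>F. f i m) \<phi> v"
    by (rule Dlin_add) (use insert finite_supp_sum in auto)
  finally show ?case using insert by simp
qed

lemma Dlin_delta: "(1::'b::comm_ring_1) \<noteq> 0 \<Longrightarrow> Dlin (delta M :: _ \<Rightarrow> 'b) \<phi> v = DM M \<phi> v"
proof -
  assume "(1::'b) \<noteq> 0"
  then have "supp (delta M :: _ \<Rightarrow> 'b) = {M}" by (auto simp: supp_def delta_def)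
  then show ?thesis by (simp add: Dlin_def delta_def)
qed

lemma DM_lin: "finite I \<Longrightarrow> DM P (\<lambda>u. \<Sum>i\<in>I. c i * F i u) v = (\<Sum>i\<in>I. c i * DM P (F i) v)"
  unfolding DM_def by (simp add: Dh_sum Dh_scale)

lemma DM_zero: "DM P (\<lambda>u. 0) v = 0"
  unfolding DM_def by (simp add: Dh_zero)

lemma Dlin_comp:
  assumes fa: "finite (supp f)" and fb: "finite (supp g)"
  shows "finite (supp (comp f g))" "Dlin (comp f g) \<phi> v = Dlin f (\<lambda>u. Dlin g \<phi> u) v"
proof -
  define S where "S = (\<Union>P\<in>supp f. \<Union>Q\<in>supp g. supp (comp_maze P Q))"
  have finS: "finite S" unfolding S_def using fa fb finite_supp_comp_maze by blast
  have sub: "supp (comp f g) \<subseteq> S"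
  proof
    fix M assume M: "M \<in> supp (comp f g)"
    show "M \<in> S"
    proof (rule ccontr)
      assume "M \<notin> S"
      then have "\<And>P Q. P \<in> supp f \<Longrightarrow> Q \<in> supp g \<Longrightarrow> comp_maze P Q M = 0"
        unfolding S_def supp_def by blast
      then have "comp f g M = 0" unfolding comp_def by simp
      then show False using M by (simp add: supp_def)
    qed
  qed
  then show "finite (supp (comp f g))" using finS finite_subset by blast
  have "Dlin (comp f g) \<phi> v = (\<Sum>M\<in>S. comp f g M * DM M \<phi> v)"
    by (rule Dlin_superset[OF finS sub])
  also have "\<dots> = (\<Sum>M\<in>S. \<Sum>P\<in>supp f. \<Sum>Q\<in>supp g. f P * g Q * (comp_maze P Q M * DM M \<phi> v))"
    unfolding comp_def by (simp add: sum_distrib_right mult.assoc)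
  also have "\<dots> = (\<Sum>P\<in>supp f. \<Sum>Q\<in>supp g. f P * g Q * (\<Sum>M\<in>S. comp_maze P Q M * DM M \<phi> v))"
  proof -
    have "(\<Sum>M\<in>S. \<Sum>P\<in>supp f. \<Sum>Q\<in>supp g. f P * g Q * (comp_maze P Q M * DM M \<phi> v))
        = (\<Sum>P\<in>supp f. \<Sum>M\<in>S. \<Sum>Q\<in>supp g. f P * g Q * (comp_maze P Q M * DM M \<phi> v))"
      by (rule sum.swap)
    also have "\<dots> = (\<Sum>P\<in>supp f. \<Sum>Q\<in>supp g. \<Sum>M\<in>S. f P * g Q * (comp_maze P Q M * DM M \<phi> v))"
      by (rule sum.cong[OF refl]) (rule sum.swap)
    also have "\<dots> = (\<Sum>P\<in>supp f. \<Sum>Q\<in>supp g. f P * g Q * (\<Sum>M\<in>S. comp_maze P Q M * DM M \<phi> v))"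
      by (simp only: sum_distrib_left)
    finally show ?thesis .
  qed
  also have "\<dots> = (\<Sum>P\<in>supp f. \<Sum>Q\<in>supp g. f P * g Q * DM P (\<lambda>u. DM Q \<phi> u) v)"
  proof (intro sum.cong refl)
    fix P Q assume "P \<in> supp f" "Q \<in> supp g"
    then have "supp (comp_maze P Q) \<subseteq> S" unfolding S_def by blast
    then have "(\<Sum>M\<in>S. comp_maze P Q M * DM M \<phi> v) = (\<Sum>M\<in>supp (comp_maze P Q). comp_maze P Q M * DM M \<phi> v)"
      by (rule sum_supp_superset[OF finS, symmetric])
    then show "f P * g Q * (\<Sum>M\<in>S. comp_maze P Q M * DM M \<phi> v) = f P * g Q * DM P (\<lambda>u. DM Q \<phi> u) v"
      by (simp add: DM_comp)
  qed
  also have "\<dots> = Dlin f (\<lambda>u. Dlin g \<phi> u) v"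
    unfolding Dlin_def using fb by (simp add: DM_lin sum_distrib_left mult.assoc)
  finally show "Dlin (comp f g) \<phi> v = Dlin f (\<lambda>u. Dlin g \<phi> u) v" .
qed

lemma smul_add: "smul a (x + y) = smul a x + smul a y"
  by (auto simp: smul_def plus_fun_def algebra_simps)
lemma smul_zero: "smul a 0 = 0"
  by (auto simp: smul_def)
lemma smul_sum: "smul a (\<Sum>i\<in>S. f i) = (\<Sum>i\<in>S. smul a (f i))"
proof (induction S rule: infinite_finite_induct)
  case (infinite A) then show ?case by (auto simp: smul_def)
next
  case empty then show ?case by (auto simp: smul_def)
next
  case (insert x F) then show ?case by (simp only: sum.insert[OF insert.hyps] smul_add insert.IH)
qed

lemma Dh_dif_comm: "Dh H M (dif h f) = dif h (Dh H M f)"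
  by (induction M) (simp_all add: dif_comm)

lemma Dh_replicate: "Dh H (replicate_mset d q) f = (dif (H q) ^^ d) f"
  by (induction d) simp_all

lemma I_d_Cons: "I_d (p # ps) (d # ds) = replicate_mset d (fst p, fst (snd p), 1) + I_d ps ds"
  by (simp add: I_d_def case_prod_beta)

lemma assignments_Nil: "assignments m [] = {[]}"
  by (auto simp: assignments_def)

lemma assignments_Cons:
  "assignments m (p # ps) = (\<lambda>(d, ds). d # ds) ` (SIGMA d:{1..m}. assignments (m - d) ps)"
proof
  show "assignments m (p # ps) \<subseteq> (\<lambda>(d, ds). d # ds) ` (SIGMA d:{1..m}. assignments (m - d) ps)"
  proof
    fix xs assume xs: "xs \<in> assignments m (p # ps)"
    then obtain d ds where e: "xs = d # ds" unfolding assignments_def by (cases xs) auto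
    with xs have "d \<in> {1..m}" "ds \<in> assignments (m - d) ps" unfolding assignments_def by auto
    then show "xs \<in> (\<lambda>(d, ds). d # ds) ` (SIGMA d:{1..m}. assignments (m - d) ps)"
      using e by force
  qed
  show "(\<lambda>(d, ds). d # ds) ` (SIGMA d:{1..m}. assignments (m - d) ps) \<subseteq> assignments m (p # ps)"
    unfolding assignments_def by auto
qed

lemma finite_assignments: "finite (assignments m ps)"
proof -
  have "assignments m ps \<subseteq> {xs. set xs \<subseteq> {..m} \<and> length xs = length ps}"
  proof
    fix xs assume "xs \<in> assignments m ps"
    then have "length xs = length ps" "sum_list xs \<le> m" unfolding assignments_def by auto
    moreover have "\<And>k. k \<in> set xs \<Longrightarrow> k \<le> sum_list xs" by (rule member_le_sum_list) simp_all
    ultimately show "xs \<in> {xs. set xs \<subseteq> {..m} \<and> length xs = length ps}" by force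
  qed
  moreover have "finite {xs. set xs \<subseteq> {..m} \<and> length xs = length ps}"
    by (rule finite_lists_length_eq) simp
  ultimately show ?thesis using finite_subset by blast
qed

context
  assumes BR: "binomial_ring TYPE('b::comm_ring_1)"
begin

lemma Pm_DM:
  fixes \<phi> :: "('a \<times> 'a \<Rightarrow> 'b) \<Rightarrow> 'b"
  assumes "Pm n \<phi>"
  shows "Pm n (\<lambda>u. DM B \<phi> u)"
proof -
  obtain bs where B: "B = mset bs" using ex_mset by metis
  define I where "I = {..<length bs}"
  have finI: "finite I" unfolding I_def by simp
  have eq: "(\<lambda>u. DM B \<phi> u) = (\<lambda>u. \<Sum>S\<in>Pow I. (-1) ^ (card I - card S) * \<phi> (\<Sum>i\<in>S. Tp (bs ! i) u))"
    unfolding DM_def B I_def by (subst mset_nth) (simp add: Dh_mset_set)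
  show ?thesis unfolding eq
  proof (rule Pm_sum[OF BR])
    fix S assume "S \<in> Pow I"
    have "Pm n (\<lambda>u. \<phi> (\<Sum>i\<in>S. Tp (bs ! i) u))"
    proof (rule Pm_comp[OF BR _ _ assms])
      show "(\<Sum>i\<in>S. Tp (bs ! i) (x + y)) = (\<Sum>i\<in>S. Tp (bs ! i) x) + (\<Sum>i\<in>S. Tp (bs ! i) y)" for x y
        by (simp add: Tp_add sum.distrib)
      show "(\<Sum>i\<in>S. Tp (bs ! i) (smul a g)) = smul a (\<Sum>i\<in>S. Tp (bs ! i) g)" for a g
        by (simp add: Tp_smul smul_sum)
    qed
    then show "Pm n (\<lambda>u. (-1) ^ (card I - card S) * \<phi> (\<Sum>i\<in>S. Tp (bs ! i) u))"
      by (rule Pm_scale[OF BR])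
  qed (rule finite_Pow_iff[THEN iffD2, OF finI])
qed

lemma newton_step:
  fixes \<psi> :: "('x \<Rightarrow> 'b) \<Rightarrow> 'b"
  assumes "Pm m \<psi>"
  shows "dif (smul a g) \<psi> = (\<lambda>u. \<Sum>d\<in>{1..m}. bin a d * (dif g ^^ d) \<psi> u)"
proof
  fix u
  have N: "\<psi> (u + smul a g) = (\<Sum>d\<le>m. (dif g ^^ d) \<psi> u * bin a d)"
    using assms NPL_newton[OF BR] unfolding Pm_def[OF BR] by blast
  have "{..m} = insert 0 {1..m}" by auto
  then have "(\<Sum>d\<le>m. (dif g ^^ d) \<psi> u * bin a d) = \<psi> u + (\<Sum>d\<in>{1..m}. (dif g ^^ d) \<psi> u * bin a d)"
    by (simp add: bin_0[OF BR])
  then show "dif (smul a g) \<psi> u = (\<Sum>d\<in>{1..m}. bin a d * (dif g ^^ d) \<psi> u)"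
    using N by (simp add: dif_def mult.commute)
qed

lemma DM_IV:
  fixes \<psi> :: "('a \<times> 'a \<Rightarrow> 'b) \<Rightarrow> 'b"
  assumes "Pm m \<psi>"
  shows "Dh (\<lambda>p. Tp p v) (mset ps) \<psi> w =
    (\<Sum>ds\<in>assignments m ps. prod_list (map (\<lambda>(p, k). bin (snd (snd p)) k) (zip ps ds)) * Dh (\<lambda>p. Tp p v) (I_d ps ds) \<psi> w)"
  using assms
proof (induction ps arbitrary: m \<psi> w)
  case Nil
  then show ?case by (simp add: assignments_Nil I_d_def)
next
  case (Cons p ps)
  define H where "H = (\<lambda>p. Tp p v)"
  obtain x y a where p: "p = (x, y, a)" by (cases p) auto
  define g where "g = Tp (x, y, 1) v"
  define c where "c ds = prod_list (map (\<lambda>(p, k). bin (snd (snd p)) k) (zip ps ds))" for ds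
  have Hp: "H p = smul a g" unfolding H_def g_def p by (rule Tp_label)
  have Hq: "H (x, y, 1) = g" unfolding H_def g_def ..
  have "Dh H (mset (p # ps)) \<psi> w = Dh H (mset ps) (dif (H p) \<psi>) w"
    by (simp add: Dh_dif_comm)
  also have "dif (H p) \<psi> = (\<lambda>u. \<Sum>d\<in>{1..m}. bin a d * (dif g ^^ d) \<psi> u)"
    unfolding Hp by (rule newton_step[OF Cons.prems])
  also have "Dh H (mset ps) (\<lambda>u. \<Sum>d\<in>{1..m}. bin a d * (dif g ^^ d) \<psi> u) w
      = (\<Sum>d\<in>{1..m}. bin a d * Dh H (mset ps) ((dif g ^^ d) \<psi>) w)"
    by (simp add: Dh_sum Dh_scale)
  also have "\<dots> = (\<Sum>d\<in>{1..m}. bin a d * (\<Sum>ds\<in>assignments (m - d) ps. c ds * Dh H (I_d ps ds) ((dif g ^^ d) \<psi>) w))"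
  proof (rule sum.cong[OF refl])
    fix d assume "d \<in> {1..m}"
    then have "Pm (m - d) ((dif g ^^ d) \<psi>)" using Pm_dif_pow[OF BR Cons.prems] by simp
    then show "bin a d * Dh H (mset ps) ((dif g ^^ d) \<psi>) w
        = bin a d * (\<Sum>ds\<in>assignments (m - d) ps. c ds * Dh H (I_d ps ds) ((dif g ^^ d) \<psi>) w)"
      using Cons.IH unfolding H_def c_def by simp
  qed
  also have "\<dots> = (\<Sum>(d, ds)\<in>(SIGMA d:{1..m}. assignments (m - d) ps). bin a d * c ds * Dh H (I_d (p # ps) (d # ds)) \<psi> w)"
  proof -
    have "\<And>d ds. Dh H (I_d ps ds) ((dif g ^^ d) \<psi>) w = Dh H (I_d (p # ps) (d # ds)) \<psi> w"
      by (simp add: I_d_Cons p Dh_union Dh_replicate Hq)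
    then show ?thesis
      by (simp add: sum.Sigma[symmetric] finite_assignments sum_distrib_left mult.assoc)
  qed
  also have "\<dots> = (\<Sum>ds\<in>assignments m (p # ps). prod_list (map (\<lambda>(p, k). bin (snd (snd p)) k) (zip (p # ps) ds)) * Dh H (I_d (p # ps) ds) \<psi> w)"
  proof -
    have inj: "inj_on (\<lambda>(d, ds). d # ds) (SIGMA d:{1..m}. assignments (m - d) ps)"
      by (auto simp: inj_on_def)
    show ?thesis unfolding assignments_Cons sum.reindex[OF inj]
      by (rule sum.cong[OF refl]) (auto simp: c_def p)
  qed
  finally show ?case unfolding H_def .
qed

end

context
  assumes BR: "binomial_ring TYPE('b::comm_ring_1)"
begin

lemma rel_ok:
  fixes r :: "('a, 'b) maze \<Rightarrow> 'b" and \<psi> :: "('a \<times> 'a \<Rightarrow> 'b) \<Rightarrow> 'b"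
  assumes one: "(1::'b) \<noteq> 0" and r: "r \<in> laby_rels \<union> rels_III n \<union> rels_IV n" and psi: "Pm n \<psi>"
  shows "finite (supp r) \<and> Dlin r \<psi> v = 0"
proof -
  let ?H = "\<lambda>p. Tp p v"
  have fd: "\<And>M. finite (supp (delta M :: _ \<Rightarrow> 'b))" by (rule finite_supp_delta)
  from r consider
      (I) P x y where "r = delta (P + {#(x, y, 0)#})"
    | (II) P x y a b where "r = (\<lambda>M. delta (P + {#(x, y, a + b)#}) M - delta (P + {#(x, y, a)#}) M
            - delta (P + {#(x, y, b)#}) M - delta (P + {#(x, y, a), (x, y, b)#}) M)"
    | (III) P where "r = delta P" "size P > n"
    | (IV) ps where "r = (\<lambda>M. delta (mset ps) M -
       (\<Sum>ds\<in>assignments n ps.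
          prod_list (map (\<lambda>(p, k). bin (snd (snd p)) k) (zip ps ds)) * delta (I_d ps ds) M))"
    unfolding laby_rels_def rels_III_def rels_IV_def by blast
  then show ?thesis
  proof cases
    case I
    have "Dlin r \<psi> v = DM (add_mset (x, y, 0) P) \<psi> v" using I one by (simp add: Dlin_delta)
    also have "\<dots> = 0" by (simp add: DM_def dif_def Tp_label0)
    finally show ?thesis using I fd by simp
  next
    case II
    define F where "F = Dh ?H P \<psi>"
    have f1: "finite (supp (\<lambda>M. delta (P + {#(x, y, a + b)#}) M - delta (P + {#(x, y, a)#}) M :: 'b))"
      by (intro finite_supp_diff fd)
    have f2: "finite (supp (\<lambda>M. delta (P + {#(x, y, a + b)#}) M - delta (P + {#(x, y, a)#}) M
            - delta (P + {#(x, y, b)#}) M :: 'b))"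
      by (intro finite_supp_diff f1 fd)
    have fr: "finite (supp r)" unfolding II by (intro finite_supp_diff f2 fd)
    have "Dlin r \<psi> v = DM (P + {#(x, y, a + b)#}) \<psi> v - DM (P + {#(x, y, a)#}) \<psi> v
            - DM (P + {#(x, y, b)#}) \<psi> v - DM (P + {#(x, y, a), (x, y, b)#}) \<psi> v"
      unfolding II by (simp only: Dlin_diff[OF f2 fd] Dlin_diff[OF f1 fd] Dlin_diff[OF fd fd] Dlin_delta[OF one])
    also have "\<dots> = 0"
      by (simp add: DM_def F_def[symmetric] dif_def Tp_label_add algebra_simps)
    finally show ?thesis using fr by simp
  next
    case III
    have "zdeg n \<psi>" using psi unfolding Pm_def[OF BR] by blast
    then have "Dh ?H P \<psi> = (\<lambda>w. 0)" using III(2) by (rule Dh_big)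
    then show ?thesis using III one fd by (simp add: Dlin_delta DM_def)
  next
    case IV
    define c where "c ds = prod_list (map (\<lambda>(p, k). bin (snd (snd p)) k) (zip ps ds))" for ds
    have fs: "finite (supp (\<lambda>M. \<Sum>ds\<in>assignments n ps. c ds * delta (I_d ps ds) M :: 'b))"
      by (intro finite_supp_sum finite_assignments finite_supp_smult fd)
    have fr: "finite (supp r)" unfolding IV c_def[symmetric] by (intro finite_supp_diff fs fd)
    have "Dlin r \<psi> v = DM (mset ps) \<psi> v - (\<Sum>ds\<in>assignments n ps. c ds * DM (I_d ps ds) \<psi> v)"
      unfolding IV c_def[symmetric]
      by (simp add: Dlin_diff fs fd Dlin_delta[OF one] Dlin_sum finite_assignments finite_supp_smult Dlin_smult)
    also have "\<dots> = 0"
      unfolding DM_def c_def using DM_IV[OF BR psi] by simp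
    finally show ?thesis using fr by simp
  qed
qed

lemma kernel_ok:
  fixes k :: "('a, 'b) maze \<Rightarrow> 'b"
  assumes one: "(1::'b) \<noteq> 0" and k: "k \<in> laby_n_kernel n"
  shows "finite (supp k) \<and> (\<forall>(\<psi> :: ('a \<times> 'a \<Rightarrow> 'b) \<Rightarrow> 'b) v. Pm n \<psi> \<longrightarrow> Dlin k \<psi> v = 0)"
  using k unfolding laby_n_kernel_def
proof (induction rule: lspan.induct)
  case zero
  then show ?case by (simp add: supp_def Dlin_zero)
next
  case (gen g)
  then obtain A B r where g: "g = comp (delta A) (comp r (delta B))"
    and r: "r \<in> laby_rels \<union> rels_III n \<union> rels_IV n" by blast
  have fr: "finite (supp r)" using rel_ok[OF one r Pm_const[OF BR]] by blast
  have f1: "finite (supp (comp r (delta B)))" by (rule Dlin_comp(1)[OF fr finite_supp_delta])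
  have fg: "finite (supp g)" unfolding g by (rule Dlin_comp(1)[OF finite_supp_delta f1])
  have "Dlin g \<psi> v = 0" if psi: "Pm n \<psi>" for \<psi> :: "('a \<times> 'a \<Rightarrow> 'b) \<Rightarrow> 'b" and v
  proof -
    have "Dlin g \<psi> v = DM A (\<lambda>u. Dlin r (\<lambda>u'. DM B \<psi> u') u) v"
      unfolding g by (simp add: Dlin_comp(2)[OF finite_supp_delta f1] Dlin_comp(2)[OF fr finite_supp_delta] Dlin_delta[OF one])
    also have "(\<lambda>u. Dlin r (\<lambda>u'. DM B \<psi> u') u) = (\<lambda>u. 0)"
      using rel_ok[OF one r Pm_DM[OF BR psi]] by blast
    finally show ?thesis by (simp add: DM_zero)
  qed
  then show ?case using fg by blast
next
  case (add a b)
  then show ?case by (simp add: finite_supp_add Dlin_add)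
next
  case (smult a c)
  then show ?case by (simp add: finite_supp_smult Dlin_smult)
qed

end

definition pr :: "('a, 'b) maze \<Rightarrow> ('a \<times> 'a) multiset" where
  "pr M = image_mset (\<lambda>p. (fst p, fst (snd p))) M"

definition ee :: "'a \<times> 'a \<Rightarrow> 'a \<times> 'a \<Rightarrow> 'b::comm_ring_1" where
  "ee z0 = (\<lambda>z. if z = z0 then 1 else 0)"

definition vid :: "'a \<times> 'a \<Rightarrow> 'b::comm_ring_1" where
  "vid = (\<lambda>z. if fst z = snd z then 1 else 0)"

lemma Tp_vid: "Tp (x, y, 1) vid = ee (x, y)"
  by (auto simp: Tp_def vid_def ee_def)

lemma pure_eq: "pure M \<Longrightarrow> image_mset (\<lambda>z. (fst z, snd z, 1)) (pr M) = M"
proof -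
  assume "pure M"
  then have "image_mset (\<lambda>z. (fst z, snd z, 1)) (pr M) = image_mset id M"
    unfolding pr_def pure_def image_mset.compositionality
    by (intro image_mset_cong) (auto simp: o_def)
  then show ?thesis by simp
qed

lemma pure_pr_eq: "pure M \<Longrightarrow> pure Q \<Longrightarrow> pr M = pr Q \<longleftrightarrow> M = Q"
  using pure_eq by metis

context
  assumes BR: "binomial_ring TYPE('b::comm_ring_1)"
begin

definition phiK :: "('a \<times> 'a) set \<Rightarrow> ('a \<times> 'a \<Rightarrow> nat) \<Rightarrow> ('a \<times> 'a \<Rightarrow> 'b) \<Rightarrow> 'b" where
  "phiK Z kk w = (\<Prod>z\<in>Z. bin (w z) (kk z))"

lemma dif_phiK:
  assumes "finite Z"
  shows "dif (ee z0) (phiK Z kk) = (if z0 \<in> Z \<and> kk z0 \<ge> 1 then phiK Z (kk(z0 := kk z0 - 1)) else (\<lambda>w. 0))"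
proof
  fix w :: "'a \<times> 'a \<Rightarrow> 'b"
  show "dif (ee z0) (phiK Z kk) w = (if z0 \<in> Z \<and> kk z0 \<ge> 1 then phiK Z (kk(z0 := kk z0 - 1)) else (\<lambda>w. 0)) w"
  proof (cases "z0 \<in> Z")
    case False
    have "phiK Z kk (w + ee z0) = phiK Z kk w"
      unfolding phiK_def by (rule prod.cong[OF refl]) (use False in \<open>auto simp: ee_def\<close>)
    then show ?thesis using False by (simp add: dif_def)
  next
    case True
    define R where "R = (\<Prod>z\<in>Z - {z0}. bin (w z) (kk z))"
    have R1: "(\<Prod>z\<in>Z - {z0}. bin ((w + ee z0) z) (kk z)) = R"
      unfolding R_def by (rule prod.cong[OF refl]) (auto simp: ee_def)
    have R2: "(\<Prod>z\<in>Z - {z0}. bin (w z) ((kk(z0 := j)) z)) = R" for j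
      unfolding R_def by (rule prod.cong[OF refl]) auto
    have A: "phiK Z kk (w + ee z0) = bin (w z0 + 1) (kk z0) * R"
      unfolding phiK_def using prod.remove[OF assms True, of "\<lambda>z. bin ((w + ee z0) z) (kk z)"] R1
      by (simp add: ee_def)
    have B: "phiK Z kk w = bin (w z0) (kk z0) * R"
      unfolding phiK_def R_def by (rule prod.remove[OF assms True])
    show ?thesis
    proof (cases "kk z0")
      case 0
      then show ?thesis using A B True by (simp add: dif_def bin_0[OF BR])
    next
      case (Suc j)
      have C: "phiK Z (kk(z0 := j)) w = bin (w z0) j * R"
        unfolding phiK_def using prod.remove[OF assms True, of "\<lambda>z. bin (w z) ((kk(z0 := j)) z)"] R2
        by simp
      have "dif (ee z0) (phiK Z kk) w = bin (w z0 + 1) (Suc j) * R - bin (w z0) (Suc j) * R"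
        using A B Suc by (simp add: dif_def)
      also have "\<dots> = bin (w z0) j * R" by (simp only: bin_pascal[OF BR]) (simp add: algebra_simps)
      also have "\<dots> = phiK Z (kk(z0 := kk z0 - 1)) w" using C Suc by simp
      finally show ?thesis using True Suc by simp
    qed
  qed
qed

lemma D_pure:
  assumes Z: "finite Z" and pure: "\<forall>p\<in>#M. snd (snd p) = 1"
  shows "Dh (\<lambda>p. Tp p vid) M (phiK Z kk) =
    (if set_mset (pr M) \<subseteq> Z \<and> (\<forall>z. count (pr M) z \<le> kk z) then phiK Z (\<lambda>z. kk z - count (pr M) z) else (\<lambda>w. 0))"
  using pure
proof (induction M)
  case empty
  then show ?case by (simp add: pr_def)
next
  case (add p M)
  obtain x y where p: "p = (x, y, 1)" using add.prems by (cases p) auto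
  define z0 where "z0 = (x, y)"
  have prM: "pr (add_mset p M) = add_mset z0 (pr M)" unfolding pr_def p z0_def by simp
  have IH: "Dh (\<lambda>p. Tp p vid) M (phiK Z kk) =
    (if set_mset (pr M) \<subseteq> Z \<and> (\<forall>z. count (pr M) z \<le> kk z) then phiK Z (\<lambda>z. kk z - count (pr M) z) else (\<lambda>w. 0))"
    using add by simp
  have step: "Dh (\<lambda>p. Tp p vid) (add_mset p M) (phiK Z kk) = dif (ee z0) (Dh (\<lambda>p. Tp p vid) M (phiK Z kk))"
    by (simp add: p Tp_vid z0_def)
  show ?case
  proof (cases "set_mset (pr M) \<subseteq> Z \<and> (\<forall>z. count (pr M) z \<le> kk z)")
    case False
    have "set_mset (pr M) \<subseteq> Z \<and> (\<forall>z. count (pr M) z \<le> kk z)"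
      if a: "set_mset (pr (add_mset p M)) \<subseteq> Z \<and> (\<forall>z. count (pr (add_mset p M)) z \<le> kk z)"
    proof
      show "set_mset (pr M) \<subseteq> Z" using a unfolding prM by auto
      show "\<forall>z. count (pr M) z \<le> kk z"
      proof
        fix z
        have "count (pr M) z \<le> count (add_mset z0 (pr M)) z" by simp
        also have "\<dots> \<le> kk z"
        proof -
          have "\<forall>z. count (pr (add_mset p M)) z \<le> kk z" using a by blast
          then show ?thesis unfolding prM by blast
        qed
        finally show "count (pr M) z \<le> kk z" .
      qed
    qed
    then have cA: "\<not> (set_mset (pr (add_mset p M)) \<subseteq> Z \<and> (\<forall>z. count (pr (add_mset p M)) z \<le> kk z))"
      using False by blast
    show ?thesis unfolding step IH if_not_P[OF False] if_not_P[OF cA] by (simp add: dif_def)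
  next
    case True
    let ?k' = "\<lambda>z. kk z - count (pr M) z"
    have D: "dif (ee z0) (phiK Z ?k') = (if z0 \<in> Z \<and> ?k' z0 \<ge> 1 then phiK Z (?k'(z0 := ?k' z0 - 1)) else (\<lambda>w. 0))"
      by (rule dif_phiK[OF Z])
    have cond: "(set_mset (pr (add_mset p M)) \<subseteq> Z \<and> (\<forall>z. count (pr (add_mset p M)) z \<le> kk z))
        \<longleftrightarrow> (z0 \<in> Z \<and> ?k' z0 \<ge> 1)"
    proof
      assume a: "set_mset (pr (add_mset p M)) \<subseteq> Z \<and> (\<forall>z. count (pr (add_mset p M)) z \<le> kk z)"
      then have "count (pr M) z0 + 1 \<le> kk z0" unfolding prM by (metis count_add_mset Suc_eq_plus1)
      then show "z0 \<in> Z \<and> ?k' z0 \<ge> 1" using a unfolding prM by auto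
    next
      assume b: "z0 \<in> Z \<and> ?k' z0 \<ge> 1"
      show "set_mset (pr (add_mset p M)) \<subseteq> Z \<and> (\<forall>z. count (pr (add_mset p M)) z \<le> kk z)"
        unfolding prM using True b by auto
    qed
    have kk: "?k'(z0 := ?k' z0 - 1) = (\<lambda>z. kk z - count (pr (add_mset p M)) z)"
      unfolding prM by auto
    show ?thesis unfolding step IH using True D cond kk by simp
  qed
qed

lemma phiK_0:
  assumes "finite Z"
  shows "phiK Z j 0 = (if \<forall>z\<in>Z. j z = 0 then 1 else 0)"
proof (cases "\<forall>z\<in>Z. j z = 0")
  case True
  then show ?thesis unfolding phiK_def by (simp add: bin_0[OF BR])
next
  case False
  then obtain z i where z: "z \<in> Z" "j z = Suc i" by (metis not0_implies_Suc)
  have "(\<Prod>z\<in>Z. bin ((0::'a \<times> 'a \<Rightarrow> 'b) z) (j z)) = 0"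
  proof (rule prod_zero[OF assms])
    have "bin ((0::'a \<times> 'a \<Rightarrow> 'b) z) (j z) = 0" using z by (simp add: bin_zero_Suc[OF BR])
    then show "\<exists>a\<in>Z. bin ((0::'a \<times> 'a \<Rightarrow> 'b) a) (j a) = 0" using z(1) by blast
  qed
  then show ?thesis using False unfolding phiK_def by simp
qed

lemma sep:
  assumes "pure M" "pure Q"
  shows "DM M (phiK (set_mset (pr Q)) (count (pr Q))) vid = (if M = Q then 1 else 0)"
proof -
  let ?Z = "set_mset (pr Q)"
  have fZ: "finite ?Z" by simp
  have "DM M (phiK ?Z (count (pr Q))) vid =
    (if set_mset (pr M) \<subseteq> ?Z \<and> (\<forall>z. count (pr M) z \<le> count (pr Q) z) then phiK ?Z (\<lambda>z. count (pr Q) z - count (pr M) z) 0 else 0)"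
    unfolding DM_def using D_pure[OF fZ, of M "count (pr Q)"] assms(1) unfolding pure_def by simp
  also have "\<dots> = (if pr M = pr Q then 1 else 0)"
  proof (cases "pr M = pr Q")
    case True
    then show ?thesis by (simp add: phiK_0[OF fZ])
  next
    case False
    show ?thesis
    proof (cases "set_mset (pr M) \<subseteq> ?Z \<and> (\<forall>z. count (pr M) z \<le> count (pr Q) z)")
      case True
      have "\<not> (\<forall>z\<in>?Z. count (pr Q) z - count (pr M) z = 0)"
      proof
        assume h: "\<forall>z\<in>?Z. count (pr Q) z - count (pr M) z = 0"
        have "count (pr M) z = count (pr Q) z" for z
        proof (cases "z \<in> ?Z")
          case True
          have "count (pr M) z \<le> count (pr Q) z" using \<open>set_mset (pr M) \<subseteq> ?Z \<and> _\<close> by blast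
          moreover have "count (pr Q) z \<le> count (pr M) z" using h True by simp
          ultimately show ?thesis by simp
        next
          case False
          then have "z \<notin> set_mset (pr M)" using \<open>set_mset (pr M) \<subseteq> ?Z \<and> _\<close> by blast
          then show ?thesis using False by (simp add: not_in_iff)
        qed
        then have "pr M = pr Q" by (rule multiset_eqI)
        then show False using \<open>pr M \<noteq> pr Q\<close> by simp
      qed
      then show ?thesis using True False by (simp add: phiK_0[OF fZ])
    next
      case c2: False
      show ?thesis by (simp only: if_not_P[OF c2] if_not_P[OF False])
    qed
  qed
  also have "\<dots> = (if M = Q then 1 else 0)" using pure_pr_eq[OF assms] by simp
  finally show ?thesis .
qed

lemma Pm_phi: "size Q \<le> n \<Longrightarrow> Pm n (phiK (set_mset (pr Q)) (count (pr Q)))"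
proof -
  assume "size Q \<le> n"
  have "Pm (\<Sum>z\<in>set_mset (pr Q). count (pr Q) z) (\<lambda>w::'a \<times> 'a \<Rightarrow> 'b. \<Prod>z\<in>set_mset (pr Q). bin (w z) (count (pr Q) z))"
    by (rule Pm_prod[OF BR]) simp
  moreover have "(\<Sum>z\<in>set_mset (pr Q). count (pr Q) z) = size (pr Q)"
    by (simp only: size_multiset_overloaded_eq)
  moreover have "size (pr Q) = size Q" by (simp add: pr_def)
  ultimately show ?thesis using \<open>size Q \<le> n\<close> Pm_mono[OF BR] unfolding phiK_def by (metis (no_types, lifting))
qed

end

definition idm :: "'a set \<Rightarrow> ('a, 'b::comm_ring_1) maze" where
  "idm Y = mset_set ((\<lambda>y. (y, y, 1)) ` Y)"

lemma distinct_of_mset_set: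
  assumes "finite A" "mset xs = mset_set A"
  shows "distinct xs" "set xs = A"
proof -
  have s: "set xs = A" using assms by (metis finite_set_mset_mset_set set_mset_mset)
  then show "set xs = A" .
  show "distinct xs" unfolding distinct_count_atmost_1 using assms s by (simp add: count_mset_set')
qed

lemma card_single_filter: "card {U \<in> {C}. f U = M} = (if f C = M then 1 else 0)"
proof -
  have "{U \<in> {C}. f U = M} = (if f C = M then {C} else {})" by auto
  then show ?thesis by simp
qed

lemma comp_idL:
  fixes M :: "('a, 'b::comm_ring_1) maze"
  assumes fin: "finite Y" and tg: "tgts M = Y"
  shows "comp_maze (idm Y) M = delta M"
proof -
  define ps where "ps = (SOME ps. mset ps = (idm Y :: ('a, 'b) maze))"
  define qs where "qs = (SOME qs. mset qs = M)"
  have P1: "mset ps = mset_set ((\<lambda>y. (y, y, 1::'b)) ` Y)" unfolding ps_def idm_def by (rule some_mset)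
  have Q1: "mset qs = M" unfolding qs_def by (rule some_mset)
  have dps: "distinct ps" and sps: "set ps = (\<lambda>y. (y, y, 1::'b)) ` Y"
    using distinct_of_mset_set[OF finite_imageI[OF fin] P1] by auto
  have sqs: "set qs = set_mset M" using Q1 by auto
  define CP where "CP = comp_pairs ps qs"
  have psi: "i < length ps \<Longrightarrow> \<exists>y\<in>Y. ps ! i = (y, y, 1)" for i
  proof -
    assume "i < length ps"
    then have "ps ! i \<in> set ps" by (rule nth_mem)
    then show ?thesis unfolding sps by blast
  qed
  have tq: "j < length qs \<Longrightarrow> fst (snd (qs ! j)) \<in> Y" for j
    using nth_mem[of j qs] sqs tg unfolding tgts_def by auto
  have uniq: "(i, j) \<in> CP \<Longrightarrow> (i', j) \<in> CP \<Longrightarrow> i = i'" for i i' j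
  proof -
    assume a: "(i, j) \<in> CP" "(i', j) \<in> CP"
    then have "i < length ps" "i' < length ps" "fst (ps ! i) = fst (ps ! i')"
      unfolding CP_def comp_pairs_def by auto
    then have "ps ! i = ps ! i'"
    proof -
      obtain y where y: "ps ! i = (y, y, 1)" using psi[OF \<open>i < length ps\<close>] by blast
      obtain y' where y': "ps ! i' = (y', y', 1)" using psi[OF \<open>i' < length ps\<close>] by blast
      show ?thesis using y y' \<open>fst (ps ! i) = fst (ps ! i')\<close> by simp
    qed
    then show "i = i'" using dps \<open>i < length ps\<close> \<open>i' < length ps\<close> nth_eq_iff_index_eq by blast
  qed
  have exi: "j < length qs \<Longrightarrow> \<exists>i. (i, j) \<in> CP" for j
  proof -
    assume j: "j < length qs"
    define y where "y = fst (snd (qs ! j))"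
    have "(y, y, 1) \<in> set ps" using tq[OF j] sps unfolding y_def by auto
    then obtain i where "i < length ps" "ps ! i = (y, y, 1)" unfolding in_set_conv_nth by blast
    then show "\<exists>i. (i, j) \<in> CP" using j unfolding CP_def comp_pairs_def y_def by auto
  qed
  have exj: "i < length ps \<Longrightarrow> \<exists>j. (i, j) \<in> CP" for i
  proof -
    assume i: "i < length ps"
    define y where "y = fst (ps ! i)"
    obtain y' where "y' \<in> Y" "ps ! i = (y', y', 1)" using psi[OF i] by blast
    then have "y \<in> tgts M" using tg unfolding y_def by simp
    then obtain q where "q \<in> set qs" "fst (snd q) = y" unfolding tgts_def sqs by auto
    then obtain j where "j < length qs" "qs ! j = q" unfolding in_set_conv_nth by blast
    then show "\<exists>j. (i, j) \<in> CP" using i \<open>fst (snd q) = y\<close> unfolding CP_def comp_pairs_def y_def by auto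
  qed
  have CS: "comp_subsets ps qs = {CP}"
  proof
    show "comp_subsets ps qs \<subseteq> {CP}"
    proof
      fix U assume "U \<in> comp_subsets ps qs"
      then have U: "U \<subseteq> CP" "snd ` U = {..<length qs}" unfolding comp_subsets_def CP_def by auto
      have "CP \<subseteq> U"
      proof
        fix x assume x: "x \<in> CP"
        obtain i j where x': "x = (i, j)" by (cases x)
        then have "j < length qs" using x unfolding CP_def comp_pairs_def by auto
        then have "j \<in> snd ` U" using U(2) by simp
        then obtain y where "y \<in> U" "j = snd y" by blast
        then obtain i' where "(i', j) \<in> U" by (metis prod.collapse)
        then have "i' = i" using uniq U(1) x x' by blast
        then show "x \<in> U" using \<open>(i', j) \<in> U\<close> x' by simp
      qed
      then show "U \<in> {CP}" using U(1) by auto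
    qed
    show "{CP} \<subseteq> comp_subsets ps qs"
    proof -
      have "fst ` CP = {..<length ps}"
      proof
        show "fst ` CP \<subseteq> {..<length ps}" unfolding CP_def comp_pairs_def by auto
        show "{..<length ps} \<subseteq> fst ` CP" using exj by force
      qed
      moreover have "snd ` CP = {..<length qs}"
      proof
        show "snd ` CP \<subseteq> {..<length qs}" unfolding CP_def comp_pairs_def by auto
        show "{..<length qs} \<subseteq> snd ` CP" using exi by force
      qed
      ultimately show ?thesis unfolding comp_subsets_def CP_def by auto
    qed
  qed
  have MO: "maze_of ps qs CP = M"
  proof -
    have "maze_of ps qs CP = image_mset (\<lambda>x. qs ! snd x) (mset_set CP)"
      unfolding maze_of_def
    proof (rule image_mset_cong)
      fix x assume "x \<in># mset_set CP"
      have finCP: "finite CP" unfolding CP_def by (rule finite_subset[OF comp_pairs_sub]) simp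
      from \<open>x \<in># mset_set CP\<close> have x: "x \<in> CP" using finCP by simp
      obtain i j where x': "x = (i, j)" by (cases x)
      have ij: "i < length ps" "j < length qs" "fst (ps ! i) = fst (snd (qs ! j))"
        using x x' unfolding CP_def comp_pairs_def by auto
      obtain y where y: "ps ! i = (y, y, 1)" using psi[OF ij(1)] by blast
      then have "ps ! i = (fst (snd (qs ! j)), fst (snd (qs ! j)), 1)" using ij(3) by simp
      then show "(case x of (i, j) \<Rightarrow> (fst (qs ! j), fst (snd (ps ! i)), snd (snd (ps ! i)) * snd (snd (qs ! j)))) = qs ! snd x"
        using x' by simp
    qed
    also have "\<dots> = image_mset (nth qs) (image_mset snd (mset_set CP))" by (simp add: image_mset.compositionality o_def)
    also have "image_mset snd (mset_set CP) = mset_set (snd ` CP)"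
    proof (rule image_mset_mset_set)
      show "inj_on snd CP"
      proof (rule inj_onI)
        fix x y assume "x \<in> CP" "y \<in> CP" "snd x = snd y"
        then show "x = y" using uniq[of "fst x" "snd x" "fst y"] by (cases x, cases y) auto
      qed
    qed
    also have "snd ` CP = {..<length qs}"
    proof -
      have "CP \<in> comp_subsets ps qs" using CS by simp
      then show ?thesis unfolding comp_subsets_def by simp
    qed
    also have "image_mset (nth qs) (mset_set {..<length qs}) = M" by (simp only: mset_nth[symmetric] Q1)
    finally show ?thesis .
  qed
  have "comp_maze (idm Y) M = (\<lambda>M'. of_nat (card {U \<in> comp_subsets ps qs. maze_of ps qs U = M'}))"
    unfolding comp_maze_eq ps_def qs_def by (rule refl)
  also have "\<dots> = delta M"
  proof
    fix M'
    show "of_nat (card {U \<in> comp_subsets ps qs. maze_of ps qs U = M'}) = delta M M'"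
      unfolding CS card_single_filter MO delta_def by simp
  qed
  finally show ?thesis .
qed


lemma comp_idR:
  fixes M :: "('a, 'b::comm_ring_1) maze"
  assumes fin: "finite X" and sr: "srcs M = X"
  shows "comp_maze M (idm X) = delta M"
proof -
  define ps where "ps = (SOME ps. mset ps = M)"
  define qs where "qs = (SOME qs. mset qs = (idm X :: ('a, 'b) maze))"
  have Q1: "mset qs = mset_set ((\<lambda>y. (y, y, 1::'b)) ` X)" unfolding qs_def idm_def by (rule some_mset)
  have P1: "mset ps = M" unfolding ps_def by (rule some_mset)
  have dqs: "distinct qs" and sqs: "set qs = (\<lambda>y. (y, y, 1::'b)) ` X"
    using distinct_of_mset_set[OF finite_imageI[OF fin] Q1] by auto
  have sps: "set ps = set_mset M" using P1 by auto
  define CP where "CP = comp_pairs ps qs"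
  have finCP: "finite CP" unfolding CP_def by (rule finite_subset[OF comp_pairs_sub]) simp
  have qsj: "j < length qs \<Longrightarrow> \<exists>y\<in>X. qs ! j = (y, y, 1)" for j
  proof -
    assume "j < length qs"
    then have "qs ! j \<in> set qs" by (rule nth_mem)
    then show ?thesis unfolding sqs by blast
  qed
  have sp: "i < length ps \<Longrightarrow> fst (ps ! i) \<in> X" for i
    using nth_mem[of i ps] sps sr unfolding srcs_def by auto
  have uniq: "(i, j) \<in> CP \<Longrightarrow> (i, j') \<in> CP \<Longrightarrow> j = j'" for i j j'
  proof -
    assume a: "(i, j) \<in> CP" "(i, j') \<in> CP"
    then have "j < length qs" "j' < length qs" "fst (snd (qs ! j)) = fst (snd (qs ! j'))"
      unfolding CP_def comp_pairs_def by auto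
    then have "qs ! j = qs ! j'"
    proof -
      obtain y where y: "qs ! j = (y, y, 1)" using qsj[OF \<open>j < length qs\<close>] by blast
      obtain y' where y': "qs ! j' = (y', y', 1)" using qsj[OF \<open>j' < length qs\<close>] by blast
      show ?thesis using y y' \<open>fst (snd (qs ! j)) = fst (snd (qs ! j'))\<close> by simp
    qed
    then show "j = j'" using dqs \<open>j < length qs\<close> \<open>j' < length qs\<close> nth_eq_iff_index_eq by blast
  qed
  have exj: "i < length ps \<Longrightarrow> \<exists>j. (i, j) \<in> CP" for i
  proof -
    assume i: "i < length ps"
    define y where "y = fst (ps ! i)"
    have "(y, y, 1) \<in> set qs" using sp[OF i] sqs unfolding y_def by auto
    then obtain j where "j < length qs" "qs ! j = (y, y, 1)" unfolding in_set_conv_nth by blast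
    then show "\<exists>j. (i, j) \<in> CP" using i unfolding CP_def comp_pairs_def y_def by auto
  qed
  have exi: "j < length qs \<Longrightarrow> \<exists>i. (i, j) \<in> CP" for j
  proof -
    assume j: "j < length qs"
    obtain y where "y \<in> X" and y: "qs ! j = (y, y, 1)" using qsj[OF j] by blast
    then have "y \<in> srcs M" using sr by simp
    then obtain p where "p \<in> set ps" "fst p = y" unfolding srcs_def sps by auto
    then obtain i where "i < length ps" "ps ! i = p" unfolding in_set_conv_nth by blast
    then show "\<exists>i. (i, j) \<in> CP" using j y \<open>fst p = y\<close> unfolding CP_def comp_pairs_def by auto
  qed
  have CS: "comp_subsets ps qs = {CP}"
  proof
    show "comp_subsets ps qs \<subseteq> {CP}"
    proof
      fix U assume "U \<in> comp_subsets ps qs"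
      then have U: "U \<subseteq> CP" "fst ` U = {..<length ps}" unfolding comp_subsets_def CP_def by auto
      have "CP \<subseteq> U"
      proof
        fix x assume x: "x \<in> CP"
        obtain i j where x': "x = (i, j)" by (cases x)
        then have "i < length ps" using x unfolding CP_def comp_pairs_def by auto
        then have "i \<in> fst ` U" using U(2) by simp
        then obtain y where "y \<in> U" "i = fst y" by blast
        then obtain j' where "(i, j') \<in> U" by (metis prod.collapse)
        then have "j' = j" using uniq U(1) x x' by blast
        then show "x \<in> U" using \<open>(i, j') \<in> U\<close> x' by simp
      qed
      then show "U \<in> {CP}" using U(1) by auto
    qed
    show "{CP} \<subseteq> comp_subsets ps qs"
    proof -
      have "fst ` CP = {..<length ps}"
      proof
        show "fst ` CP \<subseteq> {..<length ps}" unfolding CP_def comp_pairs_def by auto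
        show "{..<length ps} \<subseteq> fst ` CP" using exj by force
      qed
      moreover have "snd ` CP = {..<length qs}"
      proof
        show "snd ` CP \<subseteq> {..<length qs}" unfolding CP_def comp_pairs_def by auto
        show "{..<length qs} \<subseteq> snd ` CP" using exi by force
      qed
      ultimately show ?thesis unfolding comp_subsets_def CP_def by auto
    qed
  qed
  have MO: "maze_of ps qs CP = M"
  proof -
    have "maze_of ps qs CP = image_mset (\<lambda>x. ps ! fst x) (mset_set CP)"
      unfolding maze_of_def
    proof (rule image_mset_cong)
      fix x assume "x \<in># mset_set CP"
      then have x: "x \<in> CP" using finCP by simp
      obtain i j where x': "x = (i, j)" by (cases x)
      have ij: "i < length ps" "j < length qs" "fst (ps ! i) = fst (snd (qs ! j))"
        using x x' unfolding CP_def comp_pairs_def by auto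
      obtain y where y: "qs ! j = (y, y, 1)" using qsj[OF ij(2)] by blast
      then have "qs ! j = (fst (ps ! i), fst (ps ! i), 1)" using ij(3) by simp
      then show "(case x of (i, j) \<Rightarrow> (fst (qs ! j), fst (snd (ps ! i)), snd (snd (ps ! i)) * snd (snd (qs ! j)))) = ps ! fst x"
        using x' by simp
    qed
    also have "\<dots> = image_mset (nth ps) (image_mset fst (mset_set CP))" by (simp add: image_mset.compositionality o_def)
    also have "image_mset fst (mset_set CP) = mset_set (fst ` CP)"
    proof (rule image_mset_mset_set)
      show "inj_on fst CP"
      proof (rule inj_onI)
        fix x y assume "x \<in> CP" "y \<in> CP" "fst x = fst y"
        then show "x = y" using uniq[of "fst x" "snd x" "snd y"] by (cases x, cases y) auto
      qed
    qed
    also have "fst ` CP = {..<length ps}"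
    proof -
      have "CP \<in> comp_subsets ps qs" using CS by simp
      then show ?thesis unfolding comp_subsets_def by simp
    qed
    also have "image_mset (nth ps) (mset_set {..<length ps}) = M" by (simp only: mset_nth[symmetric] P1)
    finally show ?thesis .
  qed
  have "comp_maze M (idm X) = (\<lambda>M'. of_nat (card {U \<in> comp_subsets ps qs. maze_of ps qs U = M'}))"
    unfolding comp_maze_eq ps_def qs_def by (rule refl)
  also have "\<dots> = delta M"
  proof
    fix M'
    show "of_nat (card {U \<in> comp_subsets ps qs. maze_of ps qs U = M'}) = delta M M'"
      unfolding CS card_single_filter MO delta_def by simp
  qed
  finally show ?thesis .
qed

lemma comp_idL_fun:
  fixes f :: "('a, 'b::comm_ring_1) maze \<Rightarrow> 'b"
  assumes one: "(1::'b) \<noteq> 0" and fin: "finite Y" and fs: "finite (supp f)" and "\<forall>M\<in>supp f. tgts M = Y"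
  shows "comp (delta (idm Y)) f = f"
proof
  fix M
  have s: "supp (delta (idm Y) :: _ \<Rightarrow> 'b) = {idm Y}" using one by (auto simp: supp_def delta_def)
  have "comp (delta (idm Y)) f M = (\<Sum>Q\<in>supp f. f Q * delta Q M)"
    unfolding comp_def s using assms by (simp add: comp_idL delta_def)
  also have "\<dots> = (\<Sum>Q\<in>supp f. if Q = M then f Q else 0)" by (rule sum.cong) (auto simp: delta_def)
  also have "\<dots> = (if M \<in> supp f then f M else 0)" by (rule sum.delta[OF fs])
  also have "\<dots> = f M" by (auto simp: supp_def)
  finally show "comp (delta (idm Y)) f M = f M" .
qed

lemma comp_idR_fun:
  fixes f :: "('a, 'b::comm_ring_1) maze \<Rightarrow> 'b"
  assumes one: "(1::'b) \<noteq> 0" and fin: "finite X" and fs: "finite (supp f)" and "\<forall>M\<in>supp f. srcs M = X"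
  shows "comp f (delta (idm X)) = f"
proof
  fix M
  have s: "supp (delta (idm X) :: _ \<Rightarrow> 'b) = {idm X}" using one by (auto simp: supp_def delta_def)
  have "comp f (delta (idm X)) M = (\<Sum>Q\<in>supp f. f Q * delta Q M)"
    unfolding comp_def s using assms by (simp add: comp_idR delta_def)
  also have "\<dots> = (\<Sum>Q\<in>supp f. if Q = M then f Q else 0)" by (rule sum.cong) (auto simp: delta_def)
  also have "\<dots> = (if M \<in> supp f then f M else 0)" by (rule sum.delta[OF fs])
  also have "\<dots> = f M" by (auto simp: supp_def)
  finally show "comp f (delta (idm X)) M = f M" .
qed

lemma set_I_d: "length ds = length ps \<Longrightarrow> (\<forall>k\<in>set ds. k \<ge> 1) \<Longrightarrow>
    set_mset (I_d ps ds) = (\<lambda>p. (fst p, fst (snd p), 1)) ` set ps"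
proof (induction ds ps rule: list_induct2)
  case Nil then show ?case by (simp add: I_d_def)
next
  case (Cons d ds p ps)
  then show ?case by (auto simp: I_d_Cons)
qed

lemma size_I_d: "length ds = length ps \<Longrightarrow> size (I_d ps ds) = sum_list ds"
proof (induction ds ps rule: list_induct2)
  case Nil then show ?case by (simp add: I_d_def)
next
  case (Cons d ds p ps)
  then show ?case by (simp add: I_d_Cons)
qed

lemma lspan_sum: "finite I \<Longrightarrow> (\<And>i. i \<in> I \<Longrightarrow> f i \<in> lspan G) \<Longrightarrow> (\<lambda>m. \<Sum>i\<in>I. f i m) \<in> lspan G"
proof (induction I rule: finite_induct)
  case empty then show ?case by (simp add: lspan.zero)
next
  case (insert x F)
  then show ?case using lspan.add[of "f x" G "\<lambda>m. \<Sum>i\<in>F. f i m"] by simp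
qed

theorem mainTheorem12:
  fixes n :: nat and X Y :: "'a set"
  assumes "binomial_ring TYPE('b::comm_ring_1)"
    and "finite X" and "finite Y"
  shows "(\<forall>P :: ('a, 'b) maze. is_maze X Y P \<longrightarrow>
            (\<exists>s r. s \<in> lspan (delta ` {Q. is_maze X Y Q \<and> pure Q \<and> size Q \<le> n})
                 \<and> r \<in> laby_n_kernel n \<and> delta P = (\<lambda>M. s M + r M)))
       \<and> (\<forall>c :: ('a, 'b) maze \<Rightarrow> 'b.
            (\<forall>Q. \<not> (is_maze X Y Q \<and> pure Q \<and> size Q \<le> n) \<longrightarrow> c Q = 0)
            \<longrightarrow> c \<in> laby_n_kernel n \<longrightarrow> c = (\<lambda>_. 0))"
proof (cases "(1::'b) = 0")
  case True
  then have z: "\<And>x::'b. x = 0" by (metis mult_1_right mult_zero_right)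
  have "(\<lambda>_. 0) \<in> lspan (delta ` {Q. is_maze X Y Q \<and> pure Q \<and> size Q \<le> n})" by (rule lspan.zero)
  moreover have "(\<lambda>_. 0) \<in> laby_n_kernel n" unfolding laby_n_kernel_def by (rule lspan.zero)
  ultimately show ?thesis using z by (auto intro!: exI[of _ "\<lambda>_. 0"])
next
  case False
  note one = False
  note BR = assms(1)
  let ?T = "{Q. is_maze X Y Q \<and> pure Q \<and> size Q \<le> n} :: ('a, 'b) maze set"
  have part1: "\<exists>s r. s \<in> lspan (delta ` ?T) \<and> r \<in> laby_n_kernel n \<and> delta P = (\<lambda>M. s M + r M)"
    if P: "is_maze X Y P" for P :: "('a, 'b) maze"
  proof -
    obtain ps where ps: "mset ps = P" using ex_mset by blast
    define c where "c ds = prod_list (map (\<lambda>(p, k). bin (snd (snd p)) k) (zip ps ds))" for ds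
    define s where "s M = (\<Sum>ds\<in>assignments n ps. c ds * delta (I_d ps ds) M)" for M
    define r0 where "r0 M = delta (mset ps) M - s M" for M
    have r0R: "r0 \<in> rels_IV n" unfolding rels_IV_def r0_def s_def c_def by blast
    have Id_ok: "is_maze X Y (I_d ps ds) \<and> pure (I_d ps ds) \<and> size (I_d ps ds) \<le> n" if "ds \<in> assignments n ps" for ds
    proof -
      have a: "length ds = length ps" "\<forall>k\<in>set ds. k \<ge> 1" "sum_list ds \<le> n"
        using that unfolding assignments_def by auto
      have S: "set_mset (I_d ps ds) = (\<lambda>p. (fst p, fst (snd p), 1)) ` set ps" using set_I_d[OF a(1,2)] .
      have "srcs (I_d ps ds) = srcs P" "tgts (I_d ps ds) = tgts P"
        unfolding srcs_def tgts_def S ps[symmetric] by (auto simp: image_image)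
      then have "is_maze X Y (I_d ps ds)" using P unfolding is_maze_def by simp
      moreover have "pure (I_d ps ds)" unfolding pure_def using S by auto
      moreover have "size (I_d ps ds) \<le> n" using size_I_d[OF a(1)] a(3) by simp
      ultimately show ?thesis by blast
    qed
    have sT: "s \<in> lspan (delta ` ?T)"
    proof -
      have "(\<lambda>M. \<Sum>ds\<in>assignments n ps. c ds * delta (I_d ps ds) M) \<in> lspan (delta ` ?T)"
      proof (rule lspan_sum[OF finite_assignments])
        fix ds assume ds: "ds \<in> assignments n ps"
        have "delta (I_d ps ds) \<in> lspan (delta ` ?T)" using Id_ok[OF ds] by (intro lspan.gen) auto
        then show "(\<lambda>M. c ds * delta (I_d ps ds) M) \<in> lspan (delta ` ?T)" by (rule lspan.smult)
      qed
      then show ?thesis unfolding s_def[abs_def] .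
    qed
    have supp_r0: "supp r0 \<subseteq> insert (mset ps) (I_d ps ` assignments n ps)"
    proof
      fix M assume M: "M \<in> supp r0"
      show "M \<in> insert (mset ps) (I_d ps ` assignments n ps)"
      proof (rule ccontr)
        assume "M \<notin> insert (mset ps) (I_d ps ` assignments n ps)"
        then have "s M = 0" "delta (mset ps) M = 0" unfolding s_def delta_def by (auto intro!: sum.neutral)
        then have "r0 M = 0" unfolding r0_def by simp
        then show False using M by (simp add: supp_def)
      qed
    qed
    have fr0: "finite (supp r0)" using supp_r0 finite_assignments finite_subset by blast
    have srX: "\<forall>M\<in>supp r0. srcs M = X" and tgY: "\<forall>M\<in>supp r0. tgts M = Y"
      using supp_r0 Id_ok P ps unfolding is_maze_def by auto
    have r0K: "comp (delta (idm Y)) (comp r0 (delta (idm X))) = r0"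
      using comp_idR_fun[OF one assms(2) fr0 srX] comp_idL_fun[OF one assms(3) fr0] tgY by simp
    have "comp (delta (idm Y)) (comp r0 (delta (idm X))) \<in> laby_n_kernel n"
      unfolding laby_n_kernel_def using r0R by (intro lspan.gen) blast
    then have rK: "r0 \<in> laby_n_kernel n" using r0K by simp
    have "delta P = (\<lambda>M. s M + r0 M)" unfolding r0_def ps by simp
    then show ?thesis using sT rK by blast
  qed
  have part2: "c = (\<lambda>_. 0)"
    if c0: "\<forall>Q. \<not> (is_maze X Y Q \<and> pure Q \<and> size Q \<le> n) \<longrightarrow> c Q = 0" and cK: "c \<in> laby_n_kernel n"
    for c :: "('a, 'b) maze \<Rightarrow> 'b"
  proof
    fix Q
    show "c Q = 0"
    proof (cases "Q \<in> ?T")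
      case False then show ?thesis using c0 by auto
    next
      case True
      then have pQ: "pure Q" and sQ: "size Q \<le> n" by auto
      define \<phi> :: "('a \<times> 'a \<Rightarrow> 'b) \<Rightarrow> 'b" where "\<phi> = phiK (set_mset (pr Q)) (count (pr Q))"
      have Pm: "Pm n \<phi>" unfolding \<phi>_def by (rule Pm_phi[OF BR sQ])
      have K: "finite (supp c) \<and> (\<forall>(\<psi> :: ('a \<times> 'a \<Rightarrow> 'b) \<Rightarrow> 'b) v. Pm n \<psi> \<longrightarrow> Dlin c \<psi> v = 0)"
        by (rule kernel_ok[OF BR one cK])
      then have "Dlin c \<phi> vid = 0" using Pm by blast
      moreover have "Dlin c \<phi> vid = (\<Sum>M\<in>supp c. if M = Q then c M else 0)"
        unfolding Dlin_def
      proof (rule sum.cong[OF refl])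
        fix M assume "M \<in> supp c"
        then have "pure M" using c0 by (auto simp: supp_def)
        then show "c M * DM M \<phi> vid = (if M = Q then c M else 0)"
          unfolding \<phi>_def using sep[OF BR _ pQ] by simp
      qed
      moreover have "(\<Sum>M\<in>supp c. if M = Q then c M else 0) = c Q"
        using K by (simp add: sum.delta) (auto simp: supp_def)
      ultimately show ?thesis by simp
    qed
  qed
  show ?thesis using part1 part2 by blast
qed

end
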